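(* The element $s=\sum_{n\ge0}t^ns_n\in H$ is transcendental over $K$.
   Context: $p$ is a prime, $\mathbb F$ an algebraic closure of $\mathbb F_p$, $t$ an indeterminate, $H=\mathbb F((t^{\mathbb Q}))$ the Hahn field of series $\sum_{q\in\mathbb Q}a_qt^q$ ($a_q\in\mathbb F$) with well-ordered support, and $K=\bigcup_{N\ge1}\mathbb F((t^{1/N}))\subset H$ the Newton–Puiseux field. For $n\ge0$, $s_n=\sum_{j\ge n}\binom{j}{n}t^{-1/p^{j+1}}\in H$, with binomial coefficients read in $\mathbb F_p$. *)

theory Defs
  imports "HOL-Computational_Algebra.Polynomial"
begin

text \<open>Hahn series over a field F with rational exponents, represented by their
coefficient function rat => F. The Hahn field H is the set of those with well-ordered support.\<close>

definition hahn :: "(rat \<Rightarrow> 'a::zero) set" where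
  "hahn = {f. wf {(x, y). f x \<noteq> 0 \<and> f y \<noteq> 0 \<and> x < y}}"

definition hzero :: "rat \<Rightarrow> 'a::zero" where
  "hzero = (\<lambda>q. 0)"

definition hone :: "rat \<Rightarrow> 'a::{zero,one}" where
  "hone = (\<lambda>q. if q = 0 then 1 else 0)"

definition hmonom :: "'a::zero \<Rightarrow> rat \<Rightarrow> rat \<Rightarrow> 'a" where
  "hmonom a e = (\<lambda>q. if q = e then a else 0)"

text \<open>Cauchy product (the index set is finite for elements of hahn)\<close>
definition hmul :: "(rat \<Rightarrow> 'a::comm_ring_1) \<Rightarrow> (rat \<Rightarrow> 'a) \<Rightarrow> rat \<Rightarrow> 'a" where
  "hmul f g = (\<lambda>q. \<Sum>a\<in>{a. f a \<noteq> 0 \<and> g (q - a) \<noteq> 0}. f a * g (q - a))"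

primrec hpow :: "(rat \<Rightarrow> 'a::comm_ring_1) \<Rightarrow> nat \<Rightarrow> rat \<Rightarrow> 'a" where
  "hpow f 0 = hone"
| "hpow f (Suc n) = hmul f (hpow f n)"

text \<open>Sum of a (summable) family of Hahn series: coefficientwise, each coefficient
being a finite sum for a summable family.\<close>
definition hsum :: "('i \<Rightarrow> rat \<Rightarrow> 'a::comm_monoid_add) \<Rightarrow> rat \<Rightarrow> 'a" where
  "hsum F = (\<lambda>q. \<Sum>i\<in>{i. F i q \<noteq> 0}. F i q)"

text \<open>Newton-Puiseux field K: union over N of Laurent series in t^(1/N).\<close>
definition puiseux :: "(rat \<Rightarrow> 'a::zero) set" where
  "puiseux = {f. \<exists>N::nat. N > 0 \<and> (\<exists>m::int. \<forall>q. f q \<noteq> 0 \<longrightarrow>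
        (\<exists>k::int. q = of_int k / of_nat N) \<and> of_int m \<le> q)}"

definition s_n :: "nat \<Rightarrow> nat \<Rightarrow> rat \<Rightarrow> 'a::comm_ring_1" where
  "s_n p n = hsum (\<lambda>j::nat. if n \<le> j then hmonom (of_nat (j choose n)) (- 1 / (of_nat p ^ (j + 1))) else hzero)"

definition s_ser :: "nat \<Rightarrow> rat \<Rightarrow> 'a::comm_ring_1" where
  "s_ser p = hsum (\<lambda>n::nat. hmul (hmonom 1 (of_nat n)) (s_n p n))"

definition transcendental_over_puiseux :: "(rat \<Rightarrow> 'a::comm_ring_1) \<Rightarrow> bool" where
  "transcendental_over_puiseux x \<longleftrightarrow>
     (\<forall>(c :: nat \<Rightarrow> rat \<Rightarrow> 'a) d. (\<forall>i\<le>d. c i \<in> puiseux) \<and> (\<exists>i\<le>d. c i \<noteq> hzero) \<longrightarrow>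
        hsum (\<lambda>i. if i \<le> d then hmul (c i) (hpow x i) else hzero) \<noteq> hzero)"

end

theory Submission
  imports Defs "HOL-Computational_Algebra.Primes"
begin

definition wo :: "rat set \<Rightarrow> bool" where
  "wo X \<longleftrightarrow> (\<forall>S. S \<subseteq> X \<longrightarrow> S \<noteq> {} \<longrightarrow> (\<exists>m\<in>S. \<forall>x\<in>S. m \<le> x))"

definition nochain :: "rat set \<Rightarrow> bool" where
  "nochain X \<longleftrightarrow> \<not>(\<exists>g. \<forall>i. g i \<in> X \<and> g (Suc i) < g i)"

lemma wo_imp_nochain: "wo X \<Longrightarrow> nochain X"
proof (unfold nochain_def, rule notI)
  assume "wo X" and "\<exists>g. \<forall>i. g i \<in> X \<and> g (Suc i) < g i"
  then obtain g where g: "\<And>i. g i \<in> X" "\<And>i. g (Suc i) < g i" by blast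
  have "range g \<subseteq> X" "range g \<noteq> {}" using g by auto
  then obtain m where "m \<in> range g" "\<forall>x\<in>range g. m \<le> x" using \<open>wo X\<close> unfolding wo_def by blast
  then obtain i where "m = g i" "\<forall>x\<in>range g. g i \<le> x" by blast
  then have "g i \<le> g (Suc i)" by blast
  with g(2)[of i] show False by simp
qed

lemma nochain_imp_wo: "nochain X \<Longrightarrow> wo X"
proof -
  assume nc: "nochain X"
  let ?R = "{(x,y). x \<in> X \<and> y \<in> X \<and> x < y}"
  have "wf ?R" unfolding wf_iff_no_infinite_down_chain
  proof
    assume "\<exists>f. \<forall>i. (f (Suc i), f i) \<in> ?R"
    then obtain f where "\<And>i. (f (Suc i), f i) \<in> ?R" by blast
    then have "\<forall>i. f i \<in> X \<and> f (Suc i) < f i" by simp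
    then show False using nc unfolding nochain_def by blast
  qed
  show "wo X" unfolding wo_def
  proof (intro allI impI)
    fix S assume S: "S \<subseteq> X" "S \<noteq> {}"
    then obtain x0 where "x0 \<in> S" by blast
    obtain z where z: "z \<in> S" "\<And>y. (y, z) \<in> ?R \<Longrightarrow> y \<notin> S"
      using wfE_min[OF \<open>wf ?R\<close> \<open>x0 \<in> S\<close>] by blast
    have "\<forall>x\<in>S. z \<le> x"
    proof
      fix x assume x: "x \<in> S"
      show "z \<le> x"
      proof (rule ccontr)
        assume "\<not> z \<le> x"
        then have "(x, z) \<in> ?R" using x z(1) S(1) by auto
        then show False using z(2) x by blast
      qed
    qed
    then show "\<exists>m\<in>S. \<forall>x\<in>S. m \<le> x" using z(1) by blast
  qed
qed

lemma wo_iff_nochain: "wo X \<longleftrightarrow> nochain X"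
  using wo_imp_nochain nochain_imp_wo by blast

lemma hahn_iff_wo: "f \<in> hahn \<longleftrightarrow> wo {q. f q \<noteq> 0}"
proof -
  have "f \<in> hahn \<longleftrightarrow> \<not>(\<exists>g. \<forall>i. (g (Suc i), g i) \<in> {(x, y). f x \<noteq> 0 \<and> f y \<noteq> 0 \<and> x < y})"
    unfolding hahn_def wf_iff_no_infinite_down_chain by simp
  also have "\<dots> \<longleftrightarrow> nochain {q. f q \<noteq> 0}"
    unfolding nochain_def
  proof (intro arg_cong[where f=Not] iffI)
    assume "\<exists>g. \<forall>i. (g (Suc i), g i) \<in> {(x, y). f x \<noteq> 0 \<and> f y \<noteq> 0 \<and> x < y}"
    then obtain g where "\<forall>i. (g (Suc i), g i) \<in> {(x, y). f x \<noteq> 0 \<and> f y \<noteq> 0 \<and> x < y}" by blast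
    then have "\<forall>i. g i \<in> {q. f q \<noteq> 0} \<and> g (Suc i) < g i" by simp
    then show "\<exists>g. \<forall>i. g i \<in> {q. f q \<noteq> 0} \<and> g (Suc i) < g i" by blast
  next
    assume "\<exists>g. \<forall>i. g i \<in> {q. f q \<noteq> 0} \<and> g (Suc i) < g i"
    then obtain g where "\<forall>i. g i \<in> {q. f q \<noteq> 0} \<and> g (Suc i) < g i" by blast
    then have "\<forall>i. (g (Suc i), g i) \<in> {(x, y). f x \<noteq> 0 \<and> f y \<noteq> 0 \<and> x < y}" by simp
    then show "\<exists>g. \<forall>i. (g (Suc i), g i) \<in> {(x, y). f x \<noteq> 0 \<and> f y \<noteq> 0 \<and> x < y}" by blast
  qed
  finally show ?thesis using wo_iff_nochain by simp
qed

lemma wo_subset: assumes "wo X" "Y \<subseteq> X" shows "wo Y"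
  unfolding wo_def
proof (intro allI impI)
  fix S assume "S \<subseteq> Y" "S \<noteq> {}"
  then have "S \<subseteq> X" using assms(2) by blast
  then show "\<exists>m\<in>S. \<forall>x\<in>S. m \<le> x" using assms(1) \<open>S \<noteq> {}\<close> unfolding wo_def by simp
qed

lemma wo_finite: "finite X \<Longrightarrow> wo X"
  unfolding wo_def
proof (intro allI impI)
  fix S assume "finite X" "S \<subseteq> X" "S \<noteq> {}"
  then have "finite S" by (meson finite_subset)
  then show "\<exists>m\<in>S. \<forall>x\<in>S. m \<le> x" using \<open>S \<noteq> {}\<close> by (intro bexI[of _ "Min S"]) auto
qed

lemma wo_Un: assumes "wo X" "wo Y" shows "wo (X \<union> Y)"
  unfolding wo_def
proof (intro allI impI)
  fix S assume S: "S \<subseteq> X \<union> Y" "S \<noteq> {}"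
  show "\<exists>m\<in>S. \<forall>x\<in>S. m \<le> x"
  proof (cases "S \<inter> X = {}")
    case True
    then have "S \<subseteq> Y" using S by blast
    then show ?thesis using assms(2) S unfolding wo_def by blast
  next
    case F1: False
    obtain m1 where m1: "m1 \<in> S \<inter> X" "\<forall>x\<in>S \<inter> X. m1 \<le> x"
      using assms(1) F1 unfolding wo_def by (metis inf_le2)
    show ?thesis
    proof (cases "S \<inter> Y = {}")
      case True then show ?thesis using m1 S by blast
    next
      case False
      obtain m2 where m2: "m2 \<in> S \<inter> Y" "\<forall>x\<in>S \<inter> Y. m2 \<le> x"
        using assms(2) False unfolding wo_def by (metis inf_le2)
      have "\<forall>x\<in>S. min m1 m2 \<le> x"
      proof
        fix x assume "x \<in> S"
        then have "x \<in> S \<inter> X \<or> x \<in> S \<inter> Y" using S by blast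
        then show "min m1 m2 \<le> x" using m1 m2 by (meson min.coboundedI1 min.coboundedI2)
      qed
      moreover have "min m1 m2 \<in> S" using m1 m2 by (simp add: min_def)
      ultimately show ?thesis by blast
    qed
  qed
qed

lemma dec_chain_lt: assumes "\<And>i. g (Suc i) < (g i :: rat)" "m < n" shows "g n < g m"
proof -
  have "(\<lambda>i. - g i) m < (\<lambda>i. - g i) n"
    by (rule lift_Suc_mono_less) (use assms in auto)
  then show ?thesis by simp
qed

lemma wo_plus: assumes "wo X" "wo Y" shows "wo {x + y | x y. x \<in> X \<and> y \<in> Y}"
proof -
  have ncX: "nochain X" and ncY: "nochain Y" using assms wo_iff_nochain by auto
  have "nochain {x + y | x y. x \<in> X \<and> y \<in> Y}"
  proof (unfold nochain_def, rule notI)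
    assume "\<exists>g. \<forall>i. g i \<in> {x + y | x y. x \<in> X \<and> y \<in> Y} \<and> g (Suc i) < g i"
    then obtain g where g1: "\<And>i. g i \<in> {x + y | x y. x \<in> X \<and> y \<in> Y}" and g2: "\<And>i. g (Suc i) < g i" by blast
    have "\<forall>i. \<exists>ab. fst ab \<in> X \<and> snd ab \<in> Y \<and> g i = fst ab + snd ab" using g1 by fastforce
    then obtain ab where ab: "\<And>i. fst (ab i) \<in> X" "\<And>i. snd (ab i) \<in> Y" "\<And>i. g i = fst (ab i) + snd (ab i)"
      by metis
    define a where "a = (\<lambda>i. fst (ab i))"
    define b where "b = (\<lambda>i. snd (ab i))"
    have aX: "\<And>i. a i \<in> X" and bY: "\<And>i. b i \<in> Y" and gab: "\<And>i. g i = a i + b i" using ab a_def b_def by auto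
    obtain r where r: "strict_mono r" "monoseq (\<lambda>n. a (r n))" using seq_monosub by blast
    have glt: "g (r (Suc i)) < g (r i)" for i
    proof -
      have "r i < r (Suc i)" using r(1) by (simp add: strict_mono_def)
      then show ?thesis using dec_chain_lt[of g] g2 by blast
    qed
    show False
      using r(2) unfolding monoseq_def
    proof
      assume inc: "\<forall>m. \<forall>n\<ge>m. a (r m) \<le> a (r n)"
      have "\<forall>i. b (r i) \<in> Y \<and> b (r (Suc i)) < b (r i)"
      proof
        fix i
        have "a (r i) \<le> a (r (Suc i))" using inc by simp
        then show "b (r i) \<in> Y \<and> b (r (Suc i)) < b (r i)" using glt[of i] gab[of "r i"] gab[of "r (Suc i)"] bY[of "r i"] by linarith
      qed
      then have "\<exists>g. \<forall>i. g i \<in> Y \<and> g (Suc i) < g i" by (intro exI[of _ "\<lambda>i. b (r i)"])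
      then show False using ncY unfolding nochain_def by blast
    next
      assume dec: "\<forall>m. \<forall>n\<ge>m. a (r n) \<le> a (r m)"
      have "range (\<lambda>i. a (r i)) \<subseteq> X" "range (\<lambda>i. a (r i)) \<noteq> {}" using aX by auto
      then obtain m where "m \<in> range (\<lambda>i. a (r i))" "\<forall>x\<in>range (\<lambda>i. a (r i)). m \<le> x" using assms(1) unfolding wo_def by blast
      then obtain i0 where i0: "\<And>i. a (r i0) \<le> a (r i)" by auto
      have eq: "\<And>i. a (r (i0 + i)) = a (r i0)" using dec i0 by (meson antisym le_add1)
      have "\<forall>i. b (r (i0 + i)) \<in> Y \<and> b (r (i0 + Suc i)) < b (r (i0 + i))"
      proof
        fix i
        show "b (r (i0 + i)) \<in> Y \<and> b (r (i0 + Suc i)) < b (r (i0 + i))"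
          using glt[of "i0 + i"] gab[of "r (i0 + i)"] gab[of "r (i0 + Suc i)"] eq[of i] eq[of "Suc i"] bY[of "r (i0 + i)"] by simp
      qed
      then have "\<exists>g. \<forall>i. g i \<in> Y \<and> g (Suc i) < g i" by (intro exI[of _ "\<lambda>i. b (r (i0 + i))"]) simp
      then show False using ncY unfolding nochain_def by blast
    qed
  qed
  then show ?thesis using wo_iff_nochain by auto
qed

lemma wo_conv_finite: assumes "wo X" "wo Y" shows "finite {a \<in> X. q - a \<in> Y}"
proof (rule ccontr)
  assume "infinite {a \<in> X. q - a \<in> Y}"
  then obtain f :: "nat \<Rightarrow> rat" where f: "inj f" "range f \<subseteq> {a \<in> X. q - a \<in> Y}"
    using infinite_countable_subset by blast
  obtain r where r: "strict_mono r" "monoseq (\<lambda>n. f (r n))" using seq_monosub by blast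
  have ne: "\<And>i. f (r (Suc i)) \<noteq> f (r i)" using f(1) r(1) by (metis inj_eq n_not_Suc_n strict_mono_eq)
  have ncX: "nochain X" and ncY: "nochain Y" using assms wo_iff_nochain by auto
  have mem: "f i \<in> X" "q - f i \<in> Y" for i using f(2) by auto
  show False
    using r(2) unfolding monoseq_def
  proof
    assume inc: "\<forall>m. \<forall>n\<ge>m. f (r m) \<le> f (r n)"
    have "\<forall>i. q - f (r i) \<in> Y \<and> q - f (r (Suc i)) < q - f (r i)"
      using inc ne mem by (auto simp: order.strict_iff_order)
    then have "\<exists>g. \<forall>i. g i \<in> Y \<and> g (Suc i) < g i" by (intro exI[of _ "\<lambda>i. q - f (r i)"])
    then show False using ncY unfolding nochain_def by blast
  next
    assume dec: "\<forall>m. \<forall>n\<ge>m. f (r n) \<le> f (r m)"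
    have "\<forall>i. f (r i) \<in> X \<and> f (r (Suc i)) < f (r i)"
      using dec ne mem by (auto simp: order.strict_iff_order)
    then have "\<exists>g. \<forall>i. g i \<in> X \<and> g (Suc i) < g i" by (intro exI[of _ "\<lambda>i. f (r i)"])
    then show False using ncX unfolding nochain_def by blast
  qed
qed


definition sumset :: "rat set \<Rightarrow> rat set \<Rightarrow> rat set" where
  "sumset X Y = {x + y | x y. x \<in> X \<and> y \<in> Y}"

lemma sumsetI: "x \<in> X \<Longrightarrow> y \<in> Y \<Longrightarrow> z = x + y \<Longrightarrow> z \<in> sumset X Y"
  unfolding sumset_def by blast

lemma wo_sumset: "wo X \<Longrightarrow> wo Y \<Longrightarrow> wo (sumset X Y)"
  unfolding sumset_def by (rule wo_plus)

abbreviation supp :: "(rat \<Rightarrow> 'a::zero) \<Rightarrow> rat set" where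
  "supp f \<equiv> {q. f q \<noteq> 0}"

lemma hmul_superset:
  assumes "finite A" "{a. f a \<noteq> 0 \<and> g (q - a) \<noteq> 0} \<subseteq> A"
  shows "hmul f g q = (\<Sum>a\<in>A. f a * g (q - a))"
  unfolding hmul_def
  by (rule sum.mono_neutral_left) (use assms in auto)

lemma hahn_conv_finite:
  assumes "f \<in> hahn" "g \<in> hahn"
  shows "finite {a. f a \<noteq> 0 \<and> g (q - a) \<noteq> 0}"
proof -
  have eq: "{a. f a \<noteq> 0 \<and> g (q - a) \<noteq> 0} = {a \<in> supp f. q - a \<in> supp g}" by auto
  have "wo (supp f)" "wo (supp g)" using assms hahn_iff_wo by blast+
  then have "finite {a \<in> supp f. q - a \<in> supp g}" by (rule wo_conv_finite)
  then show ?thesis unfolding eq .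
qed

lemma hmul_nz: "hmul f g q \<noteq> 0 \<Longrightarrow> \<exists>a. f a \<noteq> 0 \<and> g (q - a) \<noteq> 0"
  unfolding hmul_def by (metis (mono_tags, lifting) empty_Collect_eq sum.empty)

lemma supp_hmul: "supp (hmul f g) \<subseteq> sumset (supp f) (supp g)"
proof
  fix q assume "q \<in> supp (hmul f g)"
  then obtain a where "f a \<noteq> 0" "g (q - a) \<noteq> 0" using hmul_nz by blast
  then show "q \<in> sumset (supp f) (supp g)" by (intro sumsetI[of a _ "q - a"]) auto
qed

lemma hahn_hmul: assumes "f \<in> hahn" "g \<in> hahn" shows "hmul f g \<in> hahn"
proof -
  have "wo (sumset (supp f) (supp g))" using assms by (simp add: hahn_iff_wo wo_sumset)
  then show ?thesis unfolding hahn_iff_wo using supp_hmul wo_subset by blast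
qed

lemma hahn_add: assumes "f \<in> hahn" "g \<in> hahn" shows "(\<lambda>q. f q + g q :: 'a::monoid_add) \<in> hahn"
proof -
  have "supp (\<lambda>q. f q + g q) \<subseteq> supp f \<union> supp g" by auto
  moreover have "wo (supp f \<union> supp g)" using assms by (simp add: hahn_iff_wo wo_Un)
  ultimately show ?thesis unfolding hahn_iff_wo using wo_subset by blast
qed

lemma hahn_uminus: assumes "f \<in> hahn" shows "(\<lambda>q. - f q :: 'a::ab_group_add) \<in> hahn"
  using assms unfolding hahn_iff_wo by simp

lemma hahn_finite: "finite (supp f) \<Longrightarrow> f \<in> hahn"
  unfolding hahn_iff_wo by (rule wo_finite)

lemma hahn_hzero: "hzero \<in> hahn"
  by (rule hahn_finite) (simp add: hzero_def)

lemma hahn_hone: "hone \<in> hahn"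
  by (rule hahn_finite) (simp add: hone_def)

lemma hahn_hmonom: "hmonom c e \<in> hahn"
proof (rule hahn_finite)
  have "supp (hmonom c e) \<subseteq> {e}" by (auto simp: hmonom_def)
  then show "finite (supp (hmonom c e))" using finite_subset by blast
qed

lemma hahn_restrict: assumes "f \<in> hahn" shows "(\<lambda>q. if P q then f q else 0) \<in> hahn"
proof -
  have "supp (\<lambda>q. if P q then f q else 0) \<subseteq> supp f" by auto
  then show ?thesis using assms unfolding hahn_iff_wo using wo_subset by blast
qed

lemma hmul_comm: "hmul f g = hmul g (f :: rat \<Rightarrow> 'a::comm_ring_1)"
proof
  fix q
  show "hmul f g q = hmul g f q"
    unfolding hmul_def
    by (rule sum.reindex_bij_witness[where i="\<lambda>a. q - a" and j="\<lambda>a. q - a"]) (auto simp: mult.commute)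
qed

lemma hmul_hone: "hmul hone f = (f :: rat \<Rightarrow> 'a::comm_ring_1)"
proof
  fix q
  have "hmul hone f q = (\<Sum>a\<in>{0}. hone a * f (q - a))"
    by (rule hmul_superset) (auto simp: hone_def)
  then show "hmul hone f q = f q" by (simp add: hone_def)
qed

lemma hmul_hzero: "hmul hzero f = (hzero :: rat \<Rightarrow> 'a::comm_ring_1)"
  unfolding hmul_def hzero_def by simp

lemma hmul_distrib:
  assumes "f \<in> hahn" "g \<in> hahn" "h \<in> hahn"
  shows "hmul f (\<lambda>q. g q + h q) = (\<lambda>q. hmul f g q + hmul f (h :: rat \<Rightarrow> 'a::comm_ring_1) q)"
proof
  fix q
  let ?A = "{a. f a \<noteq> 0 \<and> g (q - a) \<noteq> 0} \<union> {a. f a \<noteq> 0 \<and> h (q - a) \<noteq> 0}"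
  have fin: "finite ?A" using hahn_conv_finite assms by blast
  have "hmul f (\<lambda>q. g q + h q) q = (\<Sum>a\<in>?A. f a * (g (q - a) + h (q - a)))"
    by (rule hmul_superset[OF fin]) auto
  also have "\<dots> = (\<Sum>a\<in>?A. f a * g (q - a)) + (\<Sum>a\<in>?A. f a * h (q - a))"
    by (simp add: distrib_left sum.distrib)
  also have "(\<Sum>a\<in>?A. f a * g (q - a)) = hmul f g q"
    by (rule hmul_superset[OF fin, symmetric]) auto
  also have "(\<Sum>a\<in>?A. f a * h (q - a)) = hmul f h q"
    by (rule hmul_superset[OF fin, symmetric]) auto
  finally show "hmul f (\<lambda>q. g q + h q) q = hmul f g q + hmul f h q" .
qed

lemma hmul_assoc:
  assumes "f \<in> hahn" "g \<in> hahn" "h \<in> hahn"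
  shows "hmul (hmul f g) h = hmul f (hmul g (h :: rat \<Rightarrow> 'a::comm_ring_1))"
proof
  fix q
  define X where "X = supp f"
  define Y where "Y = supp g"
  define Z where "Z = supp h"
  have woX: "wo X" and woY: "wo Y" and woZ: "wo Z" using assms by (auto simp: X_def Y_def Z_def hahn_iff_wo)
  define A where "A = {a \<in> sumset X Y. q - a \<in> Z}"
  define B where "B = (\<lambda>a. {b \<in> X. a - b \<in> Y})"
  define B' where "B' = {b \<in> X. q - b \<in> sumset Y Z}"
  define C where "C = (\<lambda>b. {c \<in> Y. (q - b) - c \<in> Z})"
  have finA: "finite A" unfolding A_def using wo_conv_finite wo_sumset woX woY woZ by blast
  have finB: "finite (B a)" for a unfolding B_def using wo_conv_finite woX woY by blast
  have finB': "finite B'" unfolding B'_def using wo_conv_finite wo_sumset woX woY woZ by blast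
  have finC: "finite (C b)" for b unfolding C_def using wo_conv_finite woY woZ by blast
  have "hmul (hmul f g) h q = (\<Sum>a\<in>A. hmul f g a * h (q - a))"
  proof (rule hmul_superset[OF finA])
    show "{a. hmul f g a \<noteq> 0 \<and> h (q - a) \<noteq> 0} \<subseteq> A"
      using supp_hmul[of f g] unfolding A_def X_def Y_def Z_def by blast
  qed
  also have "\<dots> = (\<Sum>a\<in>A. (\<Sum>b\<in>B a. f b * g (a - b)) * h (q - a))"
  proof (rule sum.cong[OF refl])
    fix a
    have "hmul f g a = (\<Sum>b\<in>B a. f b * g (a - b))"
      by (rule hmul_superset[OF finB]) (auto simp: B_def X_def Y_def)
    then show "hmul f g a * h (q - a) = (\<Sum>b\<in>B a. f b * g (a - b)) * h (q - a)" by simp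
  qed
  also have "\<dots> = (\<Sum>a\<in>A. \<Sum>b\<in>B a. f b * g (a - b) * h (q - a))"
    by (simp add: sum_distrib_right)
  also have "\<dots> = (\<Sum>(a, b)\<in>Sigma A B. f b * g (a - b) * h (q - a))"
    by (rule sum.Sigma[OF finA]) (use finB in auto)
  also have "\<dots> = (\<Sum>(b, c)\<in>Sigma B' C. f b * (g c * h (q - b - c)))"
  proof (rule sum.reindex_bij_witness[where i="\<lambda>(b, c). (b + c, b)" and j="\<lambda>(a, b). (b, a - b)"])
    fix x assume "x \<in> Sigma A B"
    then obtain a b where x: "x = (a, b)" "a \<in> A" "b \<in> B a" by blast
    then show "(case case x of (a, b) \<Rightarrow> (b, a - b) of (b, c) \<Rightarrow> (b + c, b)) = x" by simp
    have "b \<in> X" "a - b \<in> Y" "q - a \<in> Z" using x by (auto simp: A_def B_def)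
    moreover have "q - b \<in> sumset Y Z" using \<open>a - b \<in> Y\<close> \<open>q - a \<in> Z\<close> by (intro sumsetI[of "a - b" _ "q - a"]) auto
    ultimately show "(case x of (a, b) \<Rightarrow> (b, a - b)) \<in> Sigma B' C"
      using x by (auto simp: B'_def C_def)
    show "(case (case x of (a, b) \<Rightarrow> (b, a - b)) of (b, c) \<Rightarrow> f b * (g c * h (q - b - c))) =
          (case x of (a, b) \<Rightarrow> f b * g (a - b) * h (q - a))"
      using x by (simp add: mult.assoc)
  next
    fix y assume "y \<in> Sigma B' C"
    then obtain b c where y: "y = (b, c)" "b \<in> B'" "c \<in> C b" by blast
    then show "(case case y of (b, c) \<Rightarrow> (b + c, b) of (a, b) \<Rightarrow> (b, a - b)) = y" by simp
    have "b \<in> X" "c \<in> Y" "q - b - c \<in> Z" using y by (auto simp: B'_def C_def)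
    moreover have "b + c \<in> sumset X Y" using \<open>b \<in> X\<close> \<open>c \<in> Y\<close> by (intro sumsetI) auto
    ultimately show "(case y of (b, c) \<Rightarrow> (b + c, b)) \<in> Sigma A B"
      using y by (auto simp: A_def B_def diff_diff_eq)
  qed
  also have "\<dots> = (\<Sum>b\<in>B'. \<Sum>c\<in>C b. f b * (g c * h (q - b - c)))"
    by (rule sum.Sigma[OF finB', symmetric]) (use finC in auto)
  also have "\<dots> = (\<Sum>b\<in>B'. f b * (\<Sum>c\<in>C b. g c * h (q - b - c)))"
    by (simp add: sum_distrib_left)
  also have "\<dots> = (\<Sum>b\<in>B'. f b * hmul g h (q - b))"
  proof (rule sum.cong[OF refl])
    fix b
    have "hmul g h (q - b) = (\<Sum>c\<in>C b. g c * h (q - b - c))"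
      by (rule hmul_superset[OF finC]) (auto simp: C_def Y_def Z_def)
    then show "f b * (\<Sum>c\<in>C b. g c * h (q - b - c)) = f b * hmul g h (q - b)" by simp
  qed
  also have "\<dots> = hmul f (hmul g h) q"
  proof (rule hmul_superset[OF finB', symmetric])
    show "{a. f a \<noteq> 0 \<and> hmul g h (q - a) \<noteq> 0} \<subseteq> B'"
      using supp_hmul[of g h] unfolding B'_def X_def Y_def Z_def by blast
  qed
  finally show "hmul (hmul f g) h q = hmul f (hmul g h) q" .
qed


typedef (overloaded) ('a::zero) hs = "hahn :: (rat \<Rightarrow> 'a) set" morphisms co Abs_hs
  using hahn_hzero by blast

setup_lifting type_definition_hs

instantiation hs :: (comm_ring_1) comm_ring_1
begin
lift_definition zero_hs :: "'a hs" is hzero by (rule hahn_hzero)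
lift_definition one_hs :: "'a hs" is hone by (rule hahn_hone)
lift_definition plus_hs :: "'a hs \<Rightarrow> 'a hs \<Rightarrow> 'a hs" is "\<lambda>f g q. f q + g q" by (rule hahn_add)
lift_definition uminus_hs :: "'a hs \<Rightarrow> 'a hs" is "\<lambda>f q. - f q" by (rule hahn_uminus)
lift_definition minus_hs :: "'a hs \<Rightarrow> 'a hs \<Rightarrow> 'a hs" is "\<lambda>f g q. f q - g q"
proof -
  fix f g :: "rat \<Rightarrow> 'a" assume "f \<in> hahn" "g \<in> hahn"
  then have "(\<lambda>q. f q + (\<lambda>q. - g q) q) \<in> hahn" by (intro hahn_add hahn_uminus)
  then show "(\<lambda>q. f q - g q) \<in> hahn" by simp
qed
lift_definition times_hs :: "'a hs \<Rightarrow> 'a hs \<Rightarrow> 'a hs" is hmul by (rule hahn_hmul)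
instance
proof
  fix a b c :: "'a hs"
  show "a * b * c = a * (b * c)" by transfer (rule hmul_assoc)
  show "a * b = b * a" by transfer (rule hmul_comm)
  show "1 * a = a" by transfer (rule hmul_hone)
  show "(a + b) * c = a * c + b * c"
  proof transfer
    fix f g h :: "rat \<Rightarrow> 'a" assume "f \<in> hahn" "g \<in> hahn" "h \<in> hahn"
    then show "hmul (\<lambda>q. f q + g q) h = (\<lambda>q. hmul f h q + hmul g h q)"
      using hmul_distrib[of h f g] by (simp add: hmul_comm)
  qed
  show "a + b + c = a + (b + c)" by transfer (simp add: add.assoc)
  show "a + b = b + a" by transfer (simp add: add.commute)
  show "0 + a = a" by transfer (simp add: hzero_def)
  show "- a + a = 0" by transfer (simp add: hzero_def)
  show "a - b = a + - b" by transfer simp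
  show "(0::'a hs) \<noteq> 1" by transfer (auto simp: hzero_def hone_def fun_eq_iff)
qed
end

lemma co_zero: "co 0 = hzero" by transfer simp
lemma co_one: "co 1 = hone" by transfer simp
lemma co_plus: "co (x + y) = (\<lambda>q. co x q + co y q)" by transfer simp
lemma co_uminus: "co (- x) = (\<lambda>q. - co x q)" by transfer simp
lemma co_minus: "co (x - y) = (\<lambda>q. co x q - co y q)" by transfer simp
lemma co_times: "co (x * y) = hmul (co x) (co y)" by transfer simp
lemma co_hahn: "co x \<in> hahn" using co by blast
lemma co_inject': "x = y \<longleftrightarrow> (\<forall>q. co x q = co y q)" using co_inject[of x y] by (auto simp: fun_eq_iff)

lemma co_zero_apply [simp]: "co 0 q = 0" by (simp add: co_zero hzero_def)
lemma co_plus_apply [simp]: "co (x + y) q = co x q + co y q" by (simp add: co_plus)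
lemma co_uminus_apply [simp]: "co (- x) q = - co x q" by (simp add: co_uminus)
lemma co_minus_apply [simp]: "co (x - y) q = co x q - co y q" by (simp add: co_minus)

lemma co_sum: "co (\<Sum>i\<in>A. F i) q = (\<Sum>i\<in>A. co (F i) q)"
  by (induction A rule: infinite_finite_induct) auto

lemma co_of_nat: "co (of_nat n :: 'a::comm_ring_1 hs) = (\<lambda>q. if q = 0 then of_nat n else 0)"
proof (induction n)
  case 0 then show ?case by (simp add: co_zero hzero_def fun_eq_iff)
next
  case (Suc n)
  have "co (of_nat (Suc n) :: 'a hs) = co (1 + of_nat n)" by simp
  also have "\<dots> = (\<lambda>q. if q = 0 then of_nat (Suc n) else 0)"
    unfolding co_plus co_one Suc by (auto simp: hone_def)
  finally show ?case .
qed

lemma hmul_nonzero: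
  assumes "f \<in> hahn" "g \<in> hahn" "f \<noteq> hzero" "g \<noteq> (hzero :: rat \<Rightarrow> 'a::idom)"
  shows "hmul f g \<noteq> hzero"
proof -
  have wf: "wo (supp f)" and wg: "wo (supp g)" using assms hahn_iff_wo by blast+
  have nf: "supp f \<noteq> {}" and ng: "supp g \<noteq> {}" using assms(3,4) by (auto simp: hzero_def fun_eq_iff)
  obtain m1 where m1: "m1 \<in> supp f" "\<forall>x\<in>supp f. m1 \<le> x" using wf nf unfolding wo_def by blast
  obtain m2 where m2: "m2 \<in> supp g" "\<forall>x\<in>supp g. m2 \<le> x" using wg ng unfolding wo_def by blast
  have "hmul f g (m1 + m2) = (\<Sum>a\<in>{m1}. f a * g (m1 + m2 - a))"
  proof (rule hmul_superset)
    show "{a. f a \<noteq> 0 \<and> g (m1 + m2 - a) \<noteq> 0} \<subseteq> {m1}"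
    proof
      fix a assume "a \<in> {a. f a \<noteq> 0 \<and> g (m1 + m2 - a) \<noteq> 0}"
      then have "m1 \<le> a" "m2 \<le> m1 + m2 - a" using m1 m2 by auto
      then show "a \<in> {m1}" by simp
    qed
  qed simp
  also have "\<dots> \<noteq> 0" using m1 m2 by simp
  finally show ?thesis by (auto simp: hzero_def fun_eq_iff)
qed

instance hs :: (idom) idom
proof
  fix a b :: "'a hs"
  assume "a \<noteq> 0" "b \<noteq> 0"
  then show "a * b \<noteq> 0"
  proof transfer
    fix f g :: "rat \<Rightarrow> 'a" assume "f \<in> hahn" "g \<in> hahn" "f \<noteq> hzero" "g \<noteq> hzero"
    then show "hmul f g \<noteq> hzero" by (rule hmul_nonzero)
  qed
qed

lemma CHAR_hs: "CHAR('a::idom hs) = CHAR('a)"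
proof (rule CHAR_eqI)
  show "of_nat CHAR('a) = (0 :: 'a hs)"
    by (simp add: co_inject' co_of_nat)
next
  fix x assume "of_nat x = (0 :: 'a hs)"
  then have "co (of_nat x :: 'a hs) 0 = co 0 0" by simp
  then have "of_nat x = (0::'a)" by (simp add: co_of_nat)
  then show "CHAR('a) dvd x" by (simp add: of_nat_eq_0_iff_char_dvd)
qed

lift_definition hsm :: "'a::comm_ring_1 \<Rightarrow> rat \<Rightarrow> 'a hs" is hmonom by (rule hahn_hmonom)

lemma co_hsm: "co (hsm c e) q = (if q = e then c else 0)"
  by transfer (simp add: hmonom_def)

lemma co_hsm_mult: "co (hsm c e * y) q = c * co y (q - e)"
proof -
  have "co (hsm c e * y) q = hmul (hmonom c e) (co y) q" by (simp add: co_times hsm.rep_eq)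
  also have "\<dots> = (\<Sum>a\<in>{e}. hmonom c e a * co y (q - a))"
    by (rule hmul_superset) (auto simp: hmonom_def)
  also have "\<dots> = c * co y (q - e)" by (simp add: hmonom_def)
  finally show ?thesis .
qed

lemma hsm_mult: "hsm a x * hsm b y = hsm (a * b) (x + y)"
  by (auto simp: co_inject' co_hsm_mult co_hsm)

lemma hsm_zero_exp: "hsm 1 0 = 1"
  by (auto simp: co_inject' co_hsm co_one hone_def)

lemma hsm_power: "hsm a x ^ n = hsm (a ^ n) (of_nat n * x)"
proof (induction n)
  case 0 then show ?case by (simp add: hsm_zero_exp)
next
  case (Suc n)
  then show ?case by (simp add: hsm_mult algebra_simps)
qed

lemma hsm_eq_0_iff: "hsm c e = 0 \<longleftrightarrow> c = 0"
  by (auto simp: co_inject' co_hsm)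


lift_definition hrestrict :: "(rat \<Rightarrow> bool) \<Rightarrow> 'a::comm_ring_1 hs \<Rightarrow> 'a hs"
  is "\<lambda>P f q. if P q then f q else 0" by (rule hahn_restrict)

lemma co_hrestrict: "co (hrestrict P x) q = (if P q then co x q else 0)"
  by transfer simp

lemma co_times_nz: "co (x * y) a \<noteq> 0 \<Longrightarrow> \<exists>b. co x b \<noteq> 0 \<and> co y (a - b) \<noteq> 0"
  unfolding co_times by (rule hmul_nz)

lemma supp_pow_lt:
  assumes "\<And>a. co y a \<noteq> 0 \<Longrightarrow> a < r"
  shows "co (y ^ Suc n) a \<noteq> 0 \<Longrightarrow> a < of_nat (Suc n) * r"
proof (induction n arbitrary: a)
  case 0 then show ?case using assms by simp
next
  case (Suc n)
  from Suc.prems have "co (y * y ^ Suc n) a \<noteq> 0" by simp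
  then obtain b where "co y b \<noteq> 0" "co (y ^ Suc n) (a - b) \<noteq> 0" using co_times_nz by blast
  then have "b < r" "a - b < of_nat (Suc n) * r" using assms Suc.IH by auto
  then show ?case by (simp add: algebra_simps)
qed

lemma supp_pow_gt:
  assumes "\<And>a. co y a \<noteq> 0 \<Longrightarrow> a > r"
  shows "co (y ^ Suc n) a \<noteq> 0 \<Longrightarrow> a > of_nat (Suc n) * r"
proof (induction n arbitrary: a)
  case 0 then show ?case using assms by simp
next
  case (Suc n)
  from Suc.prems have "co (y * y ^ Suc n) a \<noteq> 0" by simp
  then obtain b where "co y b \<noteq> 0" "co (y ^ Suc n) (a - b) \<noteq> 0" using co_times_nz by blast
  then have "b > r" "a - b > of_nat (Suc n) * r" using assms Suc.IH by auto
  then show ?case by (simp add: algebra_simps)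
qed

lemma frob:
  fixes x :: "'a::idom hs"
  assumes "prime CHAR('a)"
  shows "co (x ^ CHAR('a)) q = (co x (q / of_nat CHAR('a))) ^ CHAR('a)"
proof -
  define P where "P = CHAR('a)"
  have P0: "P > 0" using assms prime_gt_0_nat P_def by blast
  define r where "r = q / of_nat P"
  have qr: "q = of_nat P * r" using P0 by (simp add: r_def)
  define xl where "xl = hrestrict (\<lambda>a. a < r) x"
  define xe where "xe = hsm (co x r) r"
  define xg where "xg = hrestrict (\<lambda>a. a > r) x"
  have dec: "x = xl + xe + xg"
    by (auto simp: co_inject' xl_def xe_def xg_def co_hrestrict co_hsm)
  have ch: "prime CHAR('a hs)" "P = CHAR('a hs)" using assms by (simp_all add: CHAR_hs P_def)
  have "x ^ P = (xl + xe) ^ P + xg ^ P" unfolding dec by (rule freshmans_dream[OF ch])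
  also have "\<dots> = xl ^ P + xe ^ P + xg ^ P" by (simp add: freshmans_dream[OF ch])
  finally have xp: "x ^ P = xl ^ P + xe ^ P + xg ^ P" .
  obtain m where m: "P = Suc m" using P0 gr0_implies_Suc by blast
  have l: "co (xl ^ P) q = 0"
  proof (rule ccontr)
    assume "co (xl ^ P) q \<noteq> 0"
    then have "q < of_nat (Suc m) * r" unfolding m
      by (rule supp_pow_lt[rotated]) (auto simp: xl_def co_hrestrict split: if_splits)
    then show False using qr m by simp
  qed
  have g: "co (xg ^ P) q = 0"
  proof (rule ccontr)
    assume "co (xg ^ P) q \<noteq> 0"
    then have "q > of_nat (Suc m) * r" unfolding m
      by (rule supp_pow_gt[rotated]) (auto simp: xg_def co_hrestrict split: if_splits)
    then show False using qr m by simp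
  qed
  have e: "co (xe ^ P) q = co x r ^ P"
    unfolding xe_def hsm_power co_hsm using qr by simp
  show ?thesis using xp l g e by (simp add: P_def r_def)
qed

lemma frob_iter:
  fixes x :: "'a::idom hs"
  assumes "prime CHAR('a)"
  shows "co (x ^ (CHAR('a) ^ k)) q = (co x (q / of_nat CHAR('a) ^ k)) ^ (CHAR('a) ^ k)"
proof (induction k arbitrary: q)
  case 0 then show ?case by simp
next
  case (Suc k)
  have "x ^ (CHAR('a) ^ Suc k) = (x ^ (CHAR('a) ^ k)) ^ CHAR('a)"
    by (simp only: power_mult[symmetric] power_Suc2)
  then have "co (x ^ (CHAR('a) ^ Suc k)) q = (co (x ^ (CHAR('a) ^ k)) (q / of_nat CHAR('a))) ^ CHAR('a)"
    using frob[OF assms] by simp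
  also have "\<dots> = ((co x (q / of_nat CHAR('a) / of_nat CHAR('a) ^ k)) ^ (CHAR('a) ^ k)) ^ CHAR('a)"
    using Suc.IH by simp
  also have "\<dots> = (co x (q / of_nat CHAR('a) ^ Suc k)) ^ (CHAR('a) ^ Suc k)"
  proof -
    have a: "q / of_nat CHAR('a) / of_nat CHAR('a) ^ k = q / of_nat CHAR('a) ^ Suc k"
      by (simp add: divide_divide_eq_left)
    have b: "\<And>c::'a. (c ^ (CHAR('a) ^ k)) ^ CHAR('a) = c ^ (CHAR('a) ^ Suc k)"
      by (simp only: power_mult[symmetric] power_Suc2)
    show ?thesis unfolding a b ..
  qed
  finally show ?case .
qed

lemma of_nat_pow_char:
  assumes "prime CHAR('a::comm_ring_1)"
  shows "(of_nat n :: 'a) ^ (CHAR('a) ^ k) = of_nat n"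
proof -
  have e: "(of_nat n :: 'a) = (\<Sum>i<n. 1)" by simp
  have "(\<Sum>i<n. (1::'a)) ^ (CHAR('a) ^ k) = (\<Sum>i<n. (1::'a) ^ (CHAR('a) ^ k))"
    by (rule freshmans_dream_sum'[OF assms refl])
  then show ?thesis unfolding e by simp
qed


definition sexp :: "nat \<Rightarrow> nat \<Rightarrow> nat \<Rightarrow> rat" where
  "sexp p n j = of_nat n - 1 / of_nat p ^ (j + 1)"

lemma inv_pow_bounds:
  assumes "p \<ge> 2"
  shows "0 < 1 / (of_nat p ^ (j + 1) :: rat)" "1 / (of_nat p ^ (j + 1) :: rat) < 1"
proof -
  have "(1::rat) < of_nat p" using assms by simp
  then have "(1::rat) < of_nat p ^ (j + 1)" by (rule one_less_power) simp
  then show "0 < 1 / (of_nat p ^ (j + 1) :: rat)" "1 / (of_nat p ^ (j + 1) :: rat) < 1" by auto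
qed

lemma inv_pow_mono:
  assumes "p \<ge> 2" "j \<le> j'"
  shows "1 / (of_nat p ^ (j' + 1) :: rat) \<le> 1 / of_nat p ^ (j + 1)"
proof -
  have "(of_nat p ^ (j + 1) :: rat) \<le> of_nat p ^ (j' + 1)"
    by (rule power_increasing) (use assms in auto)
  moreover have "(0::rat) < of_nat p ^ (j + 1)" using assms by simp
  ultimately show ?thesis by (intro frac_le) auto
qed

lemma inv_pow_inj:
  assumes "p \<ge> 2" "1 / (of_nat p ^ (j + 1) :: rat) = 1 / of_nat p ^ (j' + 1)"
  shows "j = j'"
proof -
  have "(of_nat (p ^ (j + 1)) :: rat) = of_nat (p ^ (j' + 1))" using assms(2) by simp
  then have "p ^ (j + 1) = p ^ (j' + 1)" by (simp only: of_nat_eq_iff)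
  then show ?thesis using assms(1) power_inject_exp[of p "j+1" "j'+1"] by simp
qed

lemma sexp_bounds:
  assumes "p \<ge> 2"
  shows "of_nat n - 1 < sexp p n j" "sexp p n j < of_nat n"
  using inv_pow_bounds[OF assms, of j] by (auto simp: sexp_def)

lemma sexp_inj:
  assumes "p \<ge> 2" "sexp p n j = sexp p n' j'"
  shows "n = n' \<and> j = j'"
proof -
  have "n = n'"
  proof (rule ccontr)
    assume "n \<noteq> n'"
    then have "n < n' \<or> n' < n" by arith
    then show False
    proof
      assume "n < n'"
      then have "(of_nat n :: rat) \<le> of_nat n' - 1" by simp
      then show False using sexp_bounds[OF assms(1), of n j] sexp_bounds[OF assms(1), of n' j'] assms(2) by linarith
    next
      assume "n' < n"
      then have "(of_nat n' :: rat) \<le> of_nat n - 1" by simp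
      then show False using sexp_bounds[OF assms(1), of n j] sexp_bounds[OF assms(1), of n' j'] assms(2) by linarith
    qed
  qed
  moreover have "j = j'" using assms(2) \<open>n = n'\<close> inv_pow_inj[OF assms(1)] by (simp add: sexp_def)
  ultimately show ?thesis by simp
qed

lemma hsum_single: "(\<And>j. j \<noteq> i \<Longrightarrow> F j q = 0) \<Longrightarrow> hsum F q = F i q"
proof -
  assume a: "\<And>j. j \<noteq> i \<Longrightarrow> F j q = 0"
  have "hsum F q = (\<Sum>j\<in>{i}. F j q)"
    unfolding hsum_def by (rule sum.mono_neutral_left) (use a in auto)
  then show ?thesis by simp
qed

lemma hsum_zero: "(\<And>j. F j q = 0) \<Longrightarrow> hsum F q = 0"
  unfolding hsum_def by simp

lemma s_n_val:
  assumes "p \<ge> 2" "n \<le> j"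
  shows "(s_n p n (- 1 / of_nat p ^ (j + 1)) :: 'a::comm_ring_1) = of_nat (j choose n)"
  unfolding s_n_def
proof (subst hsum_single[where i=j])
  fix j' assume "j' \<noteq> j"
  then have "- 1 / (of_nat p ^ (j + 1) :: rat) \<noteq> - 1 / of_nat p ^ (j' + 1)"
    using inv_pow_inj[OF assms(1), of j j'] assms(1) by auto
  then show "(if n \<le> j' then hmonom (of_nat (j' choose n)) (- 1 / of_nat p ^ (j' + 1)) else hzero)
              (- 1 / of_nat p ^ (j + 1)) = (0::'a)"
    by (auto simp: hmonom_def hzero_def)
qed (use assms in \<open>simp add: hmonom_def\<close>)

lemma s_n_zero:
  assumes "\<And>j. n \<le> j \<Longrightarrow> r \<noteq> - 1 / of_nat p ^ (j + 1)"
  shows "(s_n p n r :: 'a::comm_ring_1) = 0"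
  unfolding s_n_def by (rule hsum_zero) (use assms in \<open>auto simp: hmonom_def hzero_def\<close>)

lemma hmul_hmonom1: "hmul (hmonom (1::'a::comm_ring_1) e) f q = f (q - e)"
proof -
  have "hmul (hmonom 1 e) f q = (\<Sum>a\<in>{e}. hmonom 1 e a * f (q - a))"
    by (rule hmul_superset) (auto simp: hmonom_def)
  then show ?thesis by (simp add: hmonom_def)
qed

lemma s_ser_val:
  assumes "p \<ge> 2" "n \<le> j"
  shows "(s_ser p (sexp p n j) :: 'a::comm_ring_1) = of_nat (j choose n)"
  unfolding s_ser_def
proof (subst hsum_single[where i=n])
  fix n' assume "n' \<noteq> n"
  show "hmul (hmonom 1 (of_nat n')) (s_n p n') (sexp p n j) = (0::'a)"
    unfolding hmul_hmonom1
  proof (rule s_n_zero)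
    fix j' assume "n' \<le> j'"
    show "sexp p n j - of_nat n' \<noteq> - 1 / of_nat p ^ (j' + 1)"
    proof
      assume "sexp p n j - of_nat n' = - 1 / of_nat p ^ (j' + 1)"
      then have "sexp p n j = sexp p n' j'" by (simp add: sexp_def)
      then show False using sexp_inj[OF assms(1)] \<open>n' \<noteq> n\<close> by blast
    qed
  qed
next
  have "sexp p n j - of_nat n = - 1 / of_nat p ^ (j + 1)" by (simp add: sexp_def)
  then show "hmul (hmonom 1 (of_nat n)) (s_n p n) (sexp p n j) = (of_nat (j choose n) :: 'a)"
    unfolding hmul_hmonom1 using s_n_val[OF assms] by simp
qed

lemma s_ser_zero:
  assumes "\<And>n j. n \<le> j \<Longrightarrow> q \<noteq> sexp p n j"
  shows "(s_ser p q :: 'a::comm_ring_1) = 0"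
  unfolding s_ser_def
proof (rule hsum_zero)
  fix n
  show "hmul (hmonom 1 (of_nat n)) (s_n p n) q = (0::'a)"
    unfolding hmul_hmonom1
  proof (rule s_n_zero)
    fix j assume "n \<le> j"
    show "q - of_nat n \<noteq> - 1 / of_nat p ^ (j + 1)"
      using assms[OF \<open>n \<le> j\<close>] by (auto simp: sexp_def)
  qed
qed

lemma s_ser_supp:
  "(s_ser p q :: 'a::comm_ring_1) \<noteq> 0 \<Longrightarrow> \<exists>n j. n \<le> j \<and> q = sexp p n j"
  using s_ser_zero by blast

lemma wo_sexp:
  assumes "p \<ge> 2"
  shows "wo {sexp p n j | n j. n \<le> j}"
  unfolding wo_def
proof (intro allI impI)
  fix S assume S: "S \<subseteq> {sexp p n j | n j. n \<le> j}" "S \<noteq> {}"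
  define n0 where "n0 = (LEAST n. \<exists>j. sexp p n j \<in> S)"
  have ex: "\<exists>n j. sexp p n j \<in> S" using S by blast
  have n0: "\<exists>j. sexp p n0 j \<in> S" unfolding n0_def by (rule LeastI_ex[OF ex])
  define j0 where "j0 = (LEAST j. sexp p n0 j \<in> S)"
  have j0: "sexp p n0 j0 \<in> S" unfolding j0_def by (rule LeastI_ex[OF n0])
  have "\<forall>x\<in>S. sexp p n0 j0 \<le> x"
  proof
    fix x assume "x \<in> S"
    then obtain n j where x: "x = sexp p n j" using S by blast
    have "n0 \<le> n" unfolding n0_def using \<open>x \<in> S\<close> x by (metis (mono_tags, lifting) Least_le)
    show "sexp p n0 j0 \<le> x"
    proof (cases "n0 = n")
      case True
      then have "j0 \<le> j" unfolding j0_def using \<open>x \<in> S\<close> x by (metis Least_le)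
      then show ?thesis using x True inv_pow_mono[OF assms] by (simp add: sexp_def)
    next
      case False
      then have "(of_nat n0 :: rat) \<le> of_nat n - 1" using \<open>n0 \<le> n\<close> by simp
      then show ?thesis using x sexp_bounds[OF assms, of n0 j0] sexp_bounds[OF assms, of n j] by linarith
    qed
  qed
  then show "\<exists>m\<in>S. \<forall>x\<in>S. m \<le> x" using j0 by blast
qed

lemma s_ser_hahn:
  assumes "p \<ge> 2"
  shows "(s_ser p :: rat \<Rightarrow> 'a::comm_ring_1) \<in> hahn"
proof -
  have "supp (s_ser p :: rat \<Rightarrow> 'a) \<subseteq> {sexp p n j | n j. n \<le> j}" using s_ser_supp by blast
  then show ?thesis unfolding hahn_iff_wo using wo_sexp[OF assms] wo_subset by blast
qed


definition pden :: "nat \<Rightarrow> (rat \<Rightarrow> 'a::zero) \<Rightarrow> bool" where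
  "pden N f \<longleftrightarrow> (\<forall>q. f q \<noteq> 0 \<longrightarrow> (\<exists>k::int. q = of_int k / of_nat N))"

lemma puiseux_iff: "f \<in> puiseux \<longleftrightarrow> (\<exists>N>0. pden N f \<and> (\<exists>m::int. \<forall>q. f q \<noteq> 0 \<longrightarrow> of_int m \<le> q))"
  unfolding puiseux_def pden_def by blast

lemma pden_mult_right: "pden N f \<Longrightarrow> M > 0 \<Longrightarrow> pden (N * M) f"
  unfolding pden_def
proof (intro allI impI)
  fix q assume a: "\<forall>q. f q \<noteq> 0 \<longrightarrow> (\<exists>k::int. q = of_int k / of_nat N)" "f q \<noteq> 0" and M: "M > 0"
  then obtain k :: int where k: "q = of_int k / of_nat N" by blast
  show "\<exists>k::int. q = of_int k / of_nat (N * M)"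
  proof (cases "M = 0")
    case True then show ?thesis using M by simp
  next
    case False
    then have "q = of_int (k * int M) / of_nat (N * M)" using k by (simp add: field_simps)
    then show ?thesis by blast
  qed
qed

lemma wo_lattice:
  assumes "N > 0"
  shows "wo {q. (\<exists>k::int. q = of_int k / of_nat N) \<and> of_int m \<le> q}"
  unfolding wo_def
proof (intro allI impI)
  fix S :: "rat set" assume S: "S \<subseteq> {q. (\<exists>k::int. q = of_int k / of_nat N) \<and> of_int m \<le> q}" "S \<noteq> {}"
  define \<phi> where "\<phi> = (\<lambda>q::rat. nat (\<lfloor>q * of_nat N\<rfloor> - m * int N))"
  have ex: "\<exists>n. \<exists>q\<in>S. \<phi> q = n" using S(2) by blast
  define n0 where "n0 = (LEAST n. \<exists>q\<in>S. \<phi> q = n)"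
  obtain q0 where q0: "q0 \<in> S" "\<phi> q0 = n0" using LeastI_ex[OF ex] unfolding n0_def by blast
  have key: "q \<in> S \<Longrightarrow> of_int (\<lfloor>q * of_nat N\<rfloor>) = q * of_nat N \<and> m * int N \<le> \<lfloor>q * of_nat N\<rfloor>" for q
  proof -
    assume "q \<in> S"
    then obtain k :: int where k: "q = of_int k / of_nat N" "of_int m \<le> q" using S(1) by blast
    have "q * of_nat N = of_int k" using k assms by simp
    moreover have "of_int (m * int N) \<le> q * of_nat N" using k(2) assms by (simp add: mult_right_mono)
    ultimately show ?thesis by (metis floor_of_int le_floor_iff)
  qed
  have "\<forall>q\<in>S. q0 \<le> q"
  proof
    fix q assume "q \<in> S"
    then have "n0 \<le> \<phi> q" unfolding n0_def by (intro Least_le) blast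
    then have "\<lfloor>q0 * of_nat N\<rfloor> \<le> \<lfloor>q * of_nat N\<rfloor>" using key[OF q0(1)] key[OF \<open>q \<in> S\<close>] q0(2) unfolding \<phi>_def by linarith
    then have "q0 * of_nat N \<le> q * of_nat N" using key[OF q0(1)] key[OF \<open>q \<in> S\<close>] by (metis of_int_le_iff)
    then show "q0 \<le> q" using assms by simp
  qed
  then show "\<exists>m\<in>S. \<forall>x\<in>S. m \<le> x" using q0(1) by blast
qed

lemma puiseux_hahn: "f \<in> puiseux \<Longrightarrow> f \<in> hahn"
proof -
  assume "f \<in> puiseux"
  then obtain N m where N: "N > 0" "pden N f" "\<forall>q. f q \<noteq> 0 \<longrightarrow> of_int m \<le> q" unfolding puiseux_iff by blast
  have "supp f \<subseteq> {q. (\<exists>k::int. q = of_int k / of_nat N) \<and> of_int m \<le> q}" using N unfolding pden_def by blast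
  then show ?thesis unfolding hahn_iff_wo using wo_lattice[OF N(1), of m] wo_subset by blast
qed

lemma puiseux_add: assumes "f \<in> puiseux" "g \<in> puiseux" shows "(\<lambda>q. f q + g q :: 'a::monoid_add) \<in> puiseux"
proof -
  obtain N1 m1 where N1: "N1 > 0" "pden N1 f" "\<forall>q. f q \<noteq> 0 \<longrightarrow> of_int m1 \<le> q" using assms(1) unfolding puiseux_iff by blast
  obtain N2 m2 where N2: "N2 > 0" "pden N2 g" "\<forall>q. g q \<noteq> 0 \<longrightarrow> of_int m2 \<le> q" using assms(2) unfolding puiseux_iff by blast
  have "pden (N1 * N2) f" using N1 N2 pden_mult_right by blast
  moreover have "pden (N2 * N1) g" using N1 N2 pden_mult_right by blast
  ultimately have "pden (N1 * N2) (\<lambda>q. f q + g q)" unfolding pden_def by (metis add.right_neutral add_0 mult.commute)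
  moreover have "\<forall>q. f q + g q \<noteq> 0 \<longrightarrow> of_int (min m1 m2) \<le> q" using N1(3) N2(3)
    by (metis (no_types, lifting) add.right_neutral add_0 min.coboundedI1 min.coboundedI2 of_int_min)
  moreover have "N1 * N2 > 0" using N1 N2 by simp
  ultimately show ?thesis unfolding puiseux_iff by blast
qed

lemma puiseux_uminus: assumes "f \<in> puiseux" shows "(\<lambda>q. - f q :: 'a::ab_group_add) \<in> puiseux"
  using assms unfolding puiseux_iff pden_def by simp

lemma puiseux_hmul: assumes "f \<in> puiseux" "g \<in> puiseux" shows "hmul f g \<in> puiseux"
proof -
  obtain N1 m1 where N1: "N1 > 0" "pden N1 f" "\<forall>q. f q \<noteq> 0 \<longrightarrow> of_int m1 \<le> q" using assms(1) unfolding puiseux_iff by blast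
  obtain N2 m2 where N2: "N2 > 0" "pden N2 g" "\<forall>q. g q \<noteq> 0 \<longrightarrow> of_int m2 \<le> q" using assms(2) unfolding puiseux_iff by blast
  have A: "(\<exists>k::int. q = of_int k / of_nat (N1 * N2)) \<and> of_int (m1 + m2) \<le> q" if nz: "hmul f g q \<noteq> 0" for q
  proof -
    obtain a where a: "f a \<noteq> 0" "g (q - a) \<noteq> 0" using hmul_nz[OF nz] by blast
    obtain k1 :: int where k1: "a = of_int k1 / of_nat N1" using N1(2) a(1) unfolding pden_def by blast
    obtain k2 :: int where k2: "q - a = of_int k2 / of_nat N2" using N2(2) a(2) unfolding pden_def by blast
    have qq: "q = of_int k1 / of_nat N1 + of_int k2 / of_nat N2" using k1 k2 by (metis diff_add_cancel add.commute)
    have "q = of_int (k1 * int N2 + k2 * int N1) / of_nat (N1 * N2)"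
      unfolding qq using N1(1) N2(1) by (simp add: field_simps)
    then have "\<exists>k::int. q = of_int k / of_nat (N1 * N2)" by blast
    moreover have "of_int m1 \<le> a" "of_int m2 \<le> q - a" using N1(3) N2(3) a by auto
    then have "of_int (m1 + m2) \<le> q" by simp
    ultimately show ?thesis by blast
  qed
  have "N1 * N2 > 0" using N1 N2 by simp
  then show ?thesis unfolding puiseux_iff pden_def using A by blast
qed

lemma puiseux_hmonom: "hmonom c (of_int z) \<in> puiseux"
  unfolding puiseux_iff pden_def
  by (rule exI[of _ 1]) (auto simp: hmonom_def intro!: exI[of _ z] split: if_splits)

lemma puiseux_hzero: "hzero \<in> puiseux"
  unfolding puiseux_iff pden_def hzero_def by (rule exI[of _ 1]) simp

lemma puiseux_hone: "hone \<in> puiseux"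
  unfolding puiseux_iff pden_def hone_def by (rule exI[of _ 1]) (auto intro!: exI[of _ 0])

definition PR :: "'a::comm_ring_1 hs set" where
  "PR = {x. co x \<in> puiseux}"

lemma PR_0: "0 \<in> PR" by (simp add: PR_def co_zero puiseux_hzero)
lemma PR_1: "1 \<in> PR" by (simp add: PR_def co_one puiseux_hone)
lemma PR_add: "x \<in> PR \<Longrightarrow> y \<in> PR \<Longrightarrow> x + y \<in> PR" by (simp add: PR_def co_plus puiseux_add)
lemma PR_uminus: "x \<in> PR \<Longrightarrow> - x \<in> PR" by (simp add: PR_def co_uminus puiseux_uminus)
lemma PR_diff: "x \<in> PR \<Longrightarrow> y \<in> PR \<Longrightarrow> x - y \<in> PR"
  using PR_add[of x "- y"] PR_uminus[of y] by simp
lemma PR_mult: "x \<in> PR \<Longrightarrow> y \<in> PR \<Longrightarrow> x * y \<in> PR" by (simp add: PR_def co_times puiseux_hmul)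
lemma PR_hsm: "hsm c (of_int z) \<in> PR" by (simp add: PR_def hsm.rep_eq puiseux_hmonom)
lemma PR_power: "x \<in> PR \<Longrightarrow> x ^ n \<in> PR" by (induction n) (auto simp: PR_1 PR_mult)
lemma PR_sum: "(\<And>i. i \<in> A \<Longrightarrow> F i \<in> PR) \<Longrightarrow> sum F A \<in> PR"
  by (induction A rule: infinite_finite_induct) (auto simp: PR_0 PR_add)

lemma PR_pden: "x \<in> PR \<Longrightarrow> \<exists>N>0. pden N (co x)"
  unfolding PR_def puiseux_iff by blast

lemma PR_pden_common:
  assumes "\<And>k. k \<in> A \<Longrightarrow> b k \<in> PR" "finite A"
  shows "\<exists>N>0. \<forall>k\<in>A. pden N (co (b k))"
  using assms(2,1)
proof (induction A rule: finite_induct)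
  case empty then show ?case by (intro exI[of _ 1]) simp
next
  case (insert a A)
  then obtain N where N: "N > 0" "\<forall>k\<in>A. pden N (co (b k))" by blast
  obtain M where M: "M > 0" "pden M (co (b a))" using PR_pden insert.prems by blast
  have "\<forall>k\<in>insert a A. pden (N * M) (co (b k))"
    using N M pden_mult_right[of M _ N] pden_mult_right[of N _ M] by (auto simp: mult.commute)
  then show ?case using N M by (intro exI[of _ "N * M"]) simp
qed


lemma coprime_pow_pm1:
  fixes P :: int
  assumes "w > 0"
  shows "coprime (P ^ M) (P ^ w - 1)"
proof -
  have "coprime (P ^ w - 1) (P ^ w)" by (rule coprime_diff_one_left)
  moreover have "P dvd P ^ w" using assms by (simp add: dvd_power)
  ultimately have "coprime (P ^ w - 1) P" using coprime_divisors[of "P ^ w - 1" "P ^ w - 1" P "P ^ w"] by simp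
  then have "coprime P (P ^ w - 1)" by (rule coprime_commute[THEN iffD1])
  then show ?thesis by (rule coprime_power_left_iff[THEN iffD2, OF disjI1])
qed

lemma nt_key:
  fixes P N L :: int
  assumes "P \<ge> 2" "\<not> P ^ M dvd N" "L * P ^ (A + M) = N * (P ^ A - P ^ B)" "A \<noteq> B"
  shows False
proof (cases "A < B")
  case True
  define w where "w = B - A"
  have w: "w > 0" "B = A + w" using True by (auto simp: w_def)
  have "P ^ A * (L * P ^ M) = P ^ A * (- (N * (P ^ w - 1)))"
    using assms(3) unfolding w(2) by (simp add: power_add algebra_simps)
  moreover have "P ^ A \<noteq> 0" using assms(1) by simp
  ultimately have "L * P ^ M = - (N * (P ^ w - 1))" using mult_left_cancel by blast
  then have "P ^ M dvd N * (P ^ w - 1)" by (metis dvd_minus_iff dvd_triv_right)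
  then have "P ^ M dvd N" using coprime_pow_pm1[OF w(1), of P M] by (simp add: coprime_dvd_mult_left_iff)
  then show False using assms(2) by simp
next
  case False
  define w where "w = A - B"
  have w: "w > 0" "A = B + w" using False assms(4) by (auto simp: w_def)
  have "P ^ B * (L * P ^ (w + M)) = P ^ B * (N * (P ^ w - 1))"
    using assms(3) unfolding w(2) by (simp add: power_add algebra_simps)
  moreover have "P ^ B \<noteq> 0" using assms(1) by simp
  ultimately have "L * P ^ (w + M) = N * (P ^ w - 1)" using mult_left_cancel by blast
  then have "P ^ (w + M) dvd N * (P ^ w - 1)" by (metis dvd_triv_right)
  then have "P ^ (w + M) dvd N" using coprime_pow_pm1[OF w(1), of P "w + M"] by (simp add: coprime_dvd_mult_left_iff)
  moreover have "P ^ M dvd P ^ (w + M)" by (simp add: le_imp_power_dvd)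
  ultimately show False using assms(2) dvd_trans by blast
qed

definition cls :: "nat \<Rightarrow> nat \<Rightarrow> nat \<Rightarrow> rat \<Rightarrow> bool" where
  "cls p N M q \<longleftrightarrow> (\<exists>z::int. q = of_int z / of_nat N - 1 / of_nat p ^ M)"

lemma cls_shift:
  assumes "N > 0"
  shows "cls p N M (q - of_int k / of_nat N) \<longleftrightarrow> cls p N M q"
proof
  assume "cls p N M (q - of_int k / of_nat N)"
  then obtain z :: int where "q - of_int k / of_nat N = of_int z / of_nat N - 1 / of_nat p ^ M" unfolding cls_def by blast
  then have "q = of_int (z + k) / of_nat N - 1 / of_nat p ^ M" using assms by (simp add: field_simps)
  then show "cls p N M q" unfolding cls_def by blast
next
  assume "cls p N M q"
  then obtain z :: int where "q = of_int z / of_nat N - 1 / of_nat p ^ M" unfolding cls_def by blast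
  then have "q - of_int k / of_nat N = of_int (z - k) / of_nat N - 1 / of_nat p ^ M" using assms by (simp add: field_simps)
  then show "cls p N M (q - of_int k / of_nat N)" unfolding cls_def by blast
qed

lemma cls_false:
  assumes "p \<ge> 2" "N > 0" "\<not> int p ^ M dvd int N" "j + 1 \<noteq> M + k"
  shows "\<not> cls p N M (of_nat p ^ k * sexp p n j)"
proof
  assume "cls p N M (of_nat p ^ k * sexp p n j)"
  then obtain z :: int where z: "of_nat p ^ k * sexp p n j = of_int z / of_nat N - 1 / of_nat p ^ M" unfolding cls_def by blast
  define A where "A = j + 1"
  define B where "B = M + k"
  define P where "P = (of_nat p :: rat)"
  have P0: "P > 0" using assms(1) by (simp add: P_def)
  have e1: "P ^ k * (of_nat n - 1 / P ^ A) = of_int z / of_nat N - 1 / P ^ M"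
    using z by (simp add: sexp_def A_def P_def)
  have e2: "of_int z * P ^ A * P ^ M - of_nat N * P ^ A = of_nat N * P ^ k * of_nat n * P ^ A * P ^ M - of_nat N * P ^ k * P ^ M"
  proof -
    define D where "D = of_nat N * P ^ A * P ^ M"
    have "(P ^ k * of_nat n - P ^ k / P ^ A) * D = (of_int z / of_nat N - 1 / P ^ M) * D"
      using e1 by (simp add: right_diff_distrib)
    then have "P ^ k * of_nat n * D - P ^ k / P ^ A * D = of_int z / of_nat N * D - 1 / P ^ M * D"
      by (simp only: left_diff_distrib)
    moreover have "P ^ k / P ^ A * D = of_nat N * P ^ k * P ^ M" using P0 by (simp add: D_def field_simps)
    moreover have "of_int z / of_nat N * D = of_int z * P ^ A * P ^ M" using assms(2) by (simp add: D_def field_simps)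
    moreover have "1 / P ^ M * D = of_nat N * P ^ A" using P0 by (simp add: D_def field_simps)
    moreover have "P ^ k * of_nat n * D = of_nat N * P ^ k * of_nat n * P ^ A * P ^ M" by (simp add: D_def algebra_simps)
    ultimately show ?thesis by linarith
  qed
  define L where "L = z - int N * int p ^ k * int n"
  have "of_int (L * int p ^ (A + M)) = (of_int (int N * (int p ^ A - int p ^ B)) :: rat)"
    using e2 by (simp add: L_def P_def B_def power_add algebra_simps)
  then have "L * int p ^ (A + M) = int N * (int p ^ A - int p ^ B)" by (simp only: of_int_eq_iff)
  then show False using nt_key[of "int p" M "int N" L A B] assms by (simp add: A_def B_def)
qed


lemma hrestrict_add: "hrestrict P (x + y) = hrestrict P x + hrestrict P y"
  by (auto simp: co_inject' co_hrestrict)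

lemma hrestrict_zero: "hrestrict P 0 = 0"
  by (auto simp: co_inject' co_hrestrict)

lemma hrestrict_sum: "hrestrict P (\<Sum>i\<in>A. F i) = (\<Sum>i\<in>A. hrestrict P (F i))"
  by (induction A rule: infinite_finite_induct) (auto simp: hrestrict_add hrestrict_zero)

lemma proj_mult:
  assumes "N > 0" "pden N (co b)"
  shows "hrestrict (cls p N M) (b * x) = b * hrestrict (cls p N M) x"
proof -
  have "co (hrestrict (cls p N M) (b * x)) q = co (b * hrestrict (cls p N M) x) q" for q
  proof -
    define A where "A = {a. co b a \<noteq> 0 \<and> co x (q - a) \<noteq> 0}"
    have finA: "finite A" unfolding A_def using hahn_conv_finite co_hahn by blast
    have l: "co (b * x) q = (\<Sum>a\<in>A. co b a * co x (q - a))"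
      unfolding co_times by (rule hmul_superset[OF finA]) (auto simp: A_def)
    have r: "co (b * hrestrict (cls p N M) x) q = (\<Sum>a\<in>A. co b a * (if cls p N M (q - a) then co x (q - a) else 0))"
    proof -
      have e: "co (hrestrict (cls p N M) x) = (\<lambda>r. if cls p N M r then co x r else 0)"
        by (simp add: fun_eq_iff co_hrestrict)
      show ?thesis unfolding co_times e
        by (rule hmul_superset[OF finA]) (auto simp: A_def split: if_splits)
    qed
    have "(\<Sum>a\<in>A. co b a * (if cls p N M (q - a) then co x (q - a) else 0)) =
          (\<Sum>a\<in>A. co b a * (if cls p N M q then co x (q - a) else 0))"
    proof (rule sum.cong[OF refl])
      fix a assume "a \<in> A"
      then have "co b a \<noteq> 0" by (simp add: A_def)
      then obtain k :: int where "a = of_int k / of_nat N" using assms(2) unfolding pden_def by blast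
      then have "cls p N M (q - a) \<longleftrightarrow> cls p N M q" using cls_shift[OF assms(1)] by simp
      then show "co b a * (if cls p N M (q - a) then co x (q - a) else 0) = co b a * (if cls p N M q then co x (q - a) else 0)"
        by simp
    qed
    then show ?thesis unfolding co_hrestrict l r by (cases "cls p N M q") auto
  qed
  then show ?thesis by (simp add: co_inject')
qed

lemma of_nat_hs: "(of_nat m :: 'a::comm_ring_1 hs) = hsm (of_nat m) 0"
  by (auto simp: co_inject' co_of_nat co_hsm)

lemma co_Y:
  "co ((1 + hsm 1 c) ^ J :: 'a::comm_ring_1 hs) r = (\<Sum>n\<le>J. if r = of_nat n * c then of_nat (J choose n) else 0)"
proof -
  have "(1 + hsm 1 c :: 'a hs) ^ J = (hsm 1 c + 1) ^ J" by (simp add: add.commute)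
  also have "\<dots> = (\<Sum>n\<le>J. of_nat (J choose n) * hsm 1 c ^ n * 1 ^ (J - n))" by (rule binomial_ring)
  also have "\<dots> = (\<Sum>n\<le>J. hsm (of_nat (J choose n)) (of_nat n * c))"
    by (simp add: hsm_power of_nat_hs hsm_mult)
  finally show ?thesis by (simp add: co_sum co_hsm)
qed

lemma sum_if_zero: "(\<And>n. n \<in> A \<Longrightarrow> \<not> P n) \<Longrightarrow> (\<Sum>n\<in>A. if P n then f n else 0) = 0"
  by (rule sum.neutral) auto

lemma sum_if_unique:
  assumes "finite A" "n0 \<in> A" "\<And>n. n \<in> A \<Longrightarrow> P n \<longleftrightarrow> n = n0"
  shows "(\<Sum>n\<in>A. if P n then f n else 0) = f n0"
proof -
  have "(\<Sum>n\<in>A. if P n then f n else 0) = (\<Sum>n\<in>A. if n = n0 then f n else 0)"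
    by (rule sum.cong[OF refl]) (use assms(3) in auto)
  also have "\<dots> = f n0" using assms(1,2) by (simp add: sum.delta')
  finally show ?thesis .
qed

context
  fixes p :: nat
  assumes pr: "prime p" and chp: "CHAR('a::idom) = p"
begin

definition sS :: "'a hs" where "sS = Abs_hs (s_ser p)"

lemma p2: "p \<ge> 2" using pr prime_ge_2_nat by blast

lemma co_sS: "co sS = s_ser p"
  unfolding sS_def by (rule Abs_hs_inverse[OF s_ser_hahn[OF p2]])

lemma co_sS_pow: "co (sS ^ (p ^ k)) q = s_ser p (q / of_nat p ^ k)"
proof -
  have "co (sS ^ (p ^ k)) q = (s_ser p (q / of_nat p ^ k)) ^ (p ^ k)"
    using frob_iter[of sS k q] pr chp co_sS by simp
  also have "\<dots> = s_ser p (q / of_nat p ^ k)"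
  proof (cases "\<exists>n j. n \<le> j \<and> q / of_nat p ^ k = sexp p n j")
    case True
    then obtain n j where "n \<le> j" "q / of_nat p ^ k = sexp p n j" by blast
    then have "s_ser p (q / of_nat p ^ k) = (of_nat (j choose n) :: 'a)" using s_ser_val[OF p2] by simp
    then show ?thesis using of_nat_pow_char[where 'a='a, of "j choose n" k] pr chp by simp
  next
    case False
    then have "s_ser p (q / of_nat p ^ k) = (0::'a)" using s_ser_zero by blast
    then show ?thesis using p2 by simp
  qed
  finally show ?thesis .
qed

lemma proj_sS:
  assumes N: "N > 0" and M: "M \<ge> 1" and nd: "\<not> int p ^ M dvd int N"
  shows "hrestrict (cls p N M) (sS ^ (p ^ k)) = hsm 1 (- 1 / of_nat p ^ M) * (1 + hsm 1 (of_nat (p ^ k))) ^ (M - 1 + k)"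
proof -
  define J where "J = M - 1 + k"
  have J1: "J + 1 = M + k" using M by (simp add: J_def)
  define P where "P = (of_nat p :: rat)"
  have P0: "P > 0" using p2 by (simp add: P_def)
  have eqv: "q + 1 / P ^ M = of_nat n * P ^ k \<longleftrightarrow> q / P ^ k = sexp p n J" for q n
  proof -
    have "sexp p n J = of_nat n - 1 / P ^ (M + k)" unfolding sexp_def J1 P_def by (rule refl)
    also have "\<dots> = (of_nat n * P ^ k - 1 / P ^ M) / P ^ k" using P0 by (simp add: field_simps power_add)
    finally have s: "sexp p n J = (of_nat n * P ^ k - 1 / P ^ M) / P ^ k" .
    have e1: "(q / P ^ k = (of_nat n * P ^ k - 1 / P ^ M) / P ^ k) \<longleftrightarrow> q = of_nat n * P ^ k - 1 / P ^ M"
      using P0 by (simp add: divide_cancel_right)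
    have e2: "q = of_nat n * P ^ k - 1 / P ^ M \<longleftrightarrow> q + 1 / P ^ M = of_nat n * P ^ k"
      by (simp add: eq_diff_eq)
    show ?thesis unfolding s e1 e2 ..
  qed
  have "co (hrestrict (cls p N M) (sS ^ (p ^ k))) q = co (hsm 1 (- 1 / P ^ M) * (1 + hsm 1 (of_nat (p ^ k))) ^ J) q" for q
  proof -
    have lhs: "co (hrestrict (cls p N M) (sS ^ (p ^ k))) q = (if cls p N M q then s_ser p (q / P ^ k) else 0)"
      by (simp add: co_hrestrict co_sS_pow P_def)
    have rhs: "co (hsm 1 (- 1 / P ^ M) * (1 + hsm 1 (of_nat (p ^ k))) ^ J) q =
        (\<Sum>n\<le>J. if q + 1 / P ^ M = of_nat n * P ^ k then of_nat (J choose n) else (0::'a))"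
      by (simp add: co_hsm_mult co_Y P_def)
    show ?thesis
    proof (cases "\<exists>n j. n \<le> j \<and> q / P ^ k = sexp p n j")
      case True
      then obtain n j where nj: "n \<le> j" "q / P ^ k = sexp p n j" by blast
      have q: "q = P ^ k * sexp p n j" using nj(2) P0 by (simp add: field_simps)
      show ?thesis
      proof (cases "j = J")
        case True
        have "q = of_int (int N * int p ^ k * int n) / of_nat N - 1 / P ^ M"
        proof -
          have "q + 1 / P ^ M = of_nat n * P ^ k" using eqv nj(2) True by simp
          moreover have "of_int (int N * int p ^ k * int n) / of_nat N = of_nat n * P ^ k" using N by (simp add: P_def)
          ultimately show ?thesis by simp
        qed
        then have c: "cls p N M q" unfolding cls_def P_def by blast
        have "(\<Sum>n'\<le>J. if q + 1 / P ^ M = of_nat n' * P ^ k then of_nat (J choose n') else (0::'a)) = of_nat (J choose n)"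
        proof (rule sum_if_unique)
          show "n \<in> {..J}" using nj(1) True by simp
          fix n' assume "n' \<in> {..J}"
          show "q + 1 / P ^ M = of_nat n' * P ^ k \<longleftrightarrow> n' = n"
          proof
            assume "q + 1 / P ^ M = of_nat n' * P ^ k"
            then have "q / P ^ k = sexp p n' J" using eqv by blast
            then have "sexp p n' J = sexp p n j" using nj(2) by simp
            then show "n' = n" using sexp_inj[OF p2] by blast
          next
            assume "n' = n"
            then show "q + 1 / P ^ M = of_nat n' * P ^ k" using eqv[of q n] nj(2) True by simp
          qed
        qed simp
        then show ?thesis unfolding lhs rhs using c nj s_ser_val[OF p2 nj(1)] True by simp
      next
        case False
        have nc: "\<not> cls p N M q" unfolding q P_def by (rule cls_false[OF p2 N nd]) (use J1 False in simp)
        have "(\<Sum>n'\<le>J. if q + 1 / P ^ M = of_nat n' * P ^ k then of_nat (J choose n') else (0::'a)) = 0"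
        proof (rule sum_if_zero)
          fix n' assume "n' \<in> {..J}"
          show "\<not> q + 1 / P ^ M = of_nat n' * P ^ k"
          proof
            assume "q + 1 / P ^ M = of_nat n' * P ^ k"
            then have "q / P ^ k = sexp p n' J" using eqv by blast
            then have "sexp p n' J = sexp p n j" using nj(2) by simp
            then have "J = j" using sexp_inj[OF p2] by blast
            then show False using False by simp
          qed
        qed
        then show ?thesis unfolding lhs rhs using nc by simp
      qed
    next
      case False
      then have z: "s_ser p (q / P ^ k) = (0::'a)" using s_ser_zero by blast
      have "(\<Sum>n'\<le>J. if q + 1 / P ^ M = of_nat n' * P ^ k then of_nat (J choose n') else (0::'a)) = 0"
      proof (rule sum_if_zero)
        fix n' assume "n' \<in> {..J}"
        then have "n' \<le> J" by simp
        show "\<not> q + 1 / P ^ M = of_nat n' * P ^ k"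
        proof
          assume "q + 1 / P ^ M = of_nat n' * P ^ k"
          then have "q / P ^ k = sexp p n' J" using eqv by blast
          then show False using False \<open>n' \<le> J\<close> by blast
        qed
      qed
      then show ?thesis unfolding lhs rhs using z by simp
    qed
  qed
  then show ?thesis by (simp add: co_inject' J_def P_def)
qed

end


lemma vander:
  fixes y :: "nat \<Rightarrow> 'b::idom"
  assumes "finite I" "inj_on y I" "\<forall>k\<in>I. y k \<noteq> 0" "\<forall>m\<ge>m0. (\<Sum>k\<in>I. \<beta> k * y k ^ m) = 0"
  shows "\<forall>k\<in>I. \<beta> k = 0"
  using assms(1,2,3,4)
proof (induction I arbitrary: \<beta> rule: finite_induct)
  case empty then show ?case by simp
next
  case (insert j I)
  have hm: "\<beta> j * y j ^ m + (\<Sum>k\<in>I. \<beta> k * y k ^ m) = 0" if "m \<ge> m0" for m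
    using insert.prems(3) that insert.hyps by (simp add: sum.insert)
  define \<beta>' where "\<beta>' = (\<lambda>k. \<beta> k * (y k - y j))"
  have "\<forall>m\<ge>m0. (\<Sum>k\<in>I. \<beta>' k * y k ^ m) = 0"
  proof (intro allI impI)
    fix m assume m: "m \<ge> m0"
    have "(\<Sum>k\<in>I. \<beta>' k * y k ^ m) = (\<Sum>k\<in>I. \<beta> k * y k ^ Suc m) - y j * (\<Sum>k\<in>I. \<beta> k * y k ^ m)"
      by (simp add: \<beta>'_def sum_distrib_left sum_subtractf[symmetric] algebra_simps)
    also have "(\<Sum>k\<in>I. \<beta> k * y k ^ Suc m) = - (\<beta> j * y j ^ Suc m)" using hm[of "Suc m"] m by (simp add: eq_neg_iff_add_eq_0 add.commute)
    also have "(\<Sum>k\<in>I. \<beta> k * y k ^ m) = - (\<beta> j * y j ^ m)" using hm[of m] m by (simp add: eq_neg_iff_add_eq_0 add.commute)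
    finally show "(\<Sum>k\<in>I. \<beta>' k * y k ^ m) = 0" by (simp add: algebra_simps)
  qed
  moreover have "inj_on y I" using insert.prems(1) by (simp add: inj_on_insert)
  moreover have "\<forall>k\<in>I. y k \<noteq> 0" using insert.prems(2) by simp
  ultimately have "\<forall>k\<in>I. \<beta>' k = 0" using insert.IH by blast
  moreover have "\<forall>k\<in>I. y k - y j \<noteq> 0" using insert.prems(1) insert.hyps(2) by (auto simp: inj_on_def)
  ultimately have I0: "\<forall>k\<in>I. \<beta> k = 0" by (simp add: \<beta>'_def)
  then have "\<beta> j * y j ^ m0 = 0" using hm[of m0] by simp
  then have "\<beta> j = 0" using insert.prems(2) by simp
  then show ?case using I0 by simp
qed

context
  fixes p :: nat
  assumes pr: "prime p" and chp: "CHAR('a::idom) = p"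
begin

lemma p2': "p \<ge> 2" using pr prime_ge_2_nat by blast

lemma not_dvd_big:
  assumes "N > 0" "M \<ge> N"
  shows "\<not> int p ^ M dvd int N"
proof
  assume "int p ^ M dvd int N"
  then have "p ^ M dvd N" by (metis of_nat_dvd_iff of_nat_power)
  then have "p ^ M \<le> N" using assms(1) by (simp add: dvd_imp_le)
  moreover have "N < 2 ^ N" by (rule less_exp)
  moreover have "(2::nat) ^ N \<le> p ^ N" using p2' by (simp add: power_mono)
  moreover have "p ^ N \<le> p ^ M" using p2' assms(2) by (simp add: power_increasing)
  ultimately show False by linarith
qed

definition yk :: "nat \<Rightarrow> 'a hs" where "yk k = 1 + hsm 1 (of_nat (p ^ k))"

lemma co_yk: "co (yk k) r = hone r + (if r = of_nat (p ^ k) then 1 else 0)"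
  by (simp add: yk_def co_one co_hsm)

lemma yk_nz: "yk k \<noteq> 0"
proof
  assume "yk k = 0"
  then have "co (yk k) 0 = 0" by simp
  moreover have "(of_nat (p ^ k) :: rat) \<noteq> 0" using p2' by simp
  ultimately show False using p2' unfolding co_yk by (simp add: hone_def)
qed

lemma yk_inj: "inj yk"
proof (rule injI)
  fix k k' assume "yk k = yk k'"
  then have "co (yk k) (of_nat (p ^ k)) = co (yk k') (of_nat (p ^ k))" by simp
  moreover have "(of_nat (p ^ k) :: rat) \<noteq> 0" using p2' by simp
  ultimately have "(of_nat (p ^ k) :: rat) = of_nat (p ^ k')" unfolding co_yk by (auto simp: hone_def split: if_splits)
  then have "p ^ k = p ^ k'" by (simp only: of_nat_eq_iff)
  then show "k = k'" using p2' power_inject_exp by (metis one_less_numeral_iff order_less_le_trans semiring_norm(76))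
qed

lemma lin_rel:
  assumes b: "\<forall>k\<le>D. b k \<in> PR" and rel: "(\<Sum>k\<le>D. b k * sS p ^ (p ^ k)) = (0 :: 'a hs)"
  shows "\<forall>k\<le>D. b k = 0"
proof -
  obtain N where N: "N > 0" "\<forall>k\<in>{..D}. pden N (co (b k))"
    using PR_pden_common[of "{..D}" b] b by auto
  have main: "(\<Sum>k\<le>D. (b k * yk k ^ k) * yk k ^ m) = 0" if m: "m \<ge> N" for m
  proof -
    define M where "M = Suc m"
    have M: "M \<ge> 1" "M \<ge> N" using m by (auto simp: M_def)
    have nd: "\<not> int p ^ M dvd int N" by (rule not_dvd_big[OF N(1) M(2)])
    have "0 = hrestrict (cls p N M) (\<Sum>k\<le>D. b k * sS p ^ (p ^ k))" using rel by (simp add: hrestrict_zero)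
    also have "\<dots> = (\<Sum>k\<le>D. b k * hrestrict (cls p N M) (sS p ^ (p ^ k)))"
      unfolding hrestrict_sum
    proof (rule sum.cong[OF refl])
      fix k assume "k \<in> {..D}"
      then have "pden N (co (b k))" using N(2) by blast
      then show "hrestrict (cls p N M) (b k * sS p ^ p ^ k) = b k * hrestrict (cls p N M) (sS p ^ p ^ k)"
        by (rule proj_mult[OF N(1)])
    qed
    also have "\<dots> = (\<Sum>k\<le>D. b k * (hsm 1 (- 1 / of_nat p ^ M) * yk k ^ (M - 1 + k)))"
      using proj_sS[OF pr chp N(1) M(1) nd] by (simp add: yk_def)
    also have "\<dots> = hsm 1 (- 1 / of_nat p ^ M) * (\<Sum>k\<le>D. (b k * yk k ^ k) * yk k ^ m)"
      by (simp add: sum_distrib_left M_def power_add algebra_simps)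
    finally have "hsm 1 (- 1 / of_nat p ^ M) * (\<Sum>k\<le>D. (b k * yk k ^ k) * yk k ^ m) = 0" by simp
    moreover have "hsm (1::'a) (- 1 / of_nat p ^ M) \<noteq> 0" by (simp add: hsm_eq_0_iff)
    ultimately show ?thesis by simp
  qed
  have "\<forall>k\<in>{..D}. b k * yk k ^ k = 0"
    by (rule vander[of "{..D}" yk N]) (use main yk_nz yk_inj in \<open>auto simp: inj_on_def inj_def\<close>)
  then show ?thesis using yk_nz by simp
qed

end


definition subr :: "'b::comm_ring_1 set \<Rightarrow> bool" where
  "subr R \<longleftrightarrow> 0 \<in> R \<and> 1 \<in> R \<and> (\<forall>x\<in>R. \<forall>y\<in>R. x + y \<in> R \<and> x - y \<in> R \<and> x * y \<in> R)"

definition polyR :: "'b::comm_ring_1 set \<Rightarrow> 'b poly \<Rightarrow> bool" where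
  "polyR R P \<longleftrightarrow> (\<forall>i. coeff P i \<in> R)"

lemma subr_neg: "subr R \<Longrightarrow> x \<in> R \<Longrightarrow> - x \<in> R"
  unfolding subr_def by (metis diff_0)

lemma subr_sum: "subr R \<Longrightarrow> (\<And>i. i \<in> A \<Longrightarrow> F i \<in> R) \<Longrightarrow> sum F A \<in> R"
  by (induction A rule: infinite_finite_induct) (auto simp: subr_def)

lemma subr_pow: "subr R \<Longrightarrow> x \<in> R \<Longrightarrow> x ^ n \<in> R"
  by (induction n) (auto simp: subr_def)

lemma polyR_sum: "subr R \<Longrightarrow> (\<And>i. i \<in> A \<Longrightarrow> polyR R (F i)) \<Longrightarrow> polyR R (sum F A)"
  unfolding polyR_def coeff_sum by (intro allI subr_sum) auto

lemma polyR_smult: "subr R \<Longrightarrow> a \<in> R \<Longrightarrow> polyR R P \<Longrightarrow> polyR R (smult a P)"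
  unfolding polyR_def subr_def by simp

lemma polyR_diff: "subr R \<Longrightarrow> polyR R P \<Longrightarrow> polyR R Q \<Longrightarrow> polyR R (P - Q)"
  unfolding polyR_def subr_def by simp

lemma polyR_add: "subr R \<Longrightarrow> polyR R P \<Longrightarrow> polyR R Q \<Longrightarrow> polyR R (P + Q)"
  unfolding polyR_def subr_def by simp

lemma polyR_X: "subr R \<Longrightarrow> polyR R P \<Longrightarrow> polyR R (monom 1 1 * P)"
  unfolding polyR_def subr_def by (simp add: coeff_monom_mult)

lemma polyR_monom: "subr R \<Longrightarrow> a \<in> R \<Longrightarrow> polyR R (monom a n)"
  unfolding polyR_def subr_def by simp

lemma poly_red:
  fixes P :: "'b::idom poly"
  assumes R: "subr R" and PR: "polyR R P" and d: "degree P = d" "d \<ge> 1"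
  shows "\<exists>e G Q. polyR R G \<and> polyR R Q \<and> (\<forall>i\<ge>d. coeff Q i = 0) \<and>
            smult (lead_coeff P ^ e) (monom 1 n) = P * G + Q"
proof (induction n)
  case 0
  have "polyR R (0::'b poly)" "polyR R (monom 1 0 :: 'b poly)" using R by (auto simp: polyR_def subr_def)
  moreover have "\<forall>i\<ge>d. coeff (monom 1 0 :: 'b poly) i = 0" using d by simp
  ultimately show ?case by (intro exI[of _ 0] exI[of _ "0::'b poly"] exI[of _ "monom 1 0 :: 'b poly"]) simp
next
  case (Suc n)
  then obtain e G Q where eGQ: "polyR R G" "polyR R Q" "\<forall>i\<ge>d. coeff Q i = 0"
    "smult (lead_coeff P ^ e) (monom 1 n) = P * G + Q" by blast
  define l where "l = lead_coeff P"
  define XQ where "XQ = monom 1 1 * Q"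
  define c where "c = coeff XQ d"
  define Q' where "Q' = smult l XQ - smult c P"
  define G' where "G' = smult l (monom 1 1 * G) + [:c:]"
  have lR: "l \<in> R" using PR by (simp add: polyR_def l_def)
  have XQR: "polyR R XQ" unfolding XQ_def by (rule polyR_X[OF R eGQ(2)])
  have cR: "c \<in> R" using XQR by (simp add: polyR_def c_def)
  have "polyR R Q'" unfolding Q'_def by (intro polyR_diff[OF R] polyR_smult[OF R] XQR PR lR cR)
  moreover have "polyR R G'" unfolding G'_def
    by (intro polyR_add[OF R] polyR_smult[OF R] polyR_X[OF R] eGQ(1) lR) (use cR R in \<open>auto simp: polyR_def subr_def coeff_pCons split: nat.split\<close>)
  moreover have "\<forall>i\<ge>d. coeff Q' i = 0"
  proof (intro allI impI)
    fix i assume i: "i \<ge> d"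
    show "coeff Q' i = 0"
    proof (cases "i = d")
      case True then show ?thesis by (simp add: Q'_def c_def l_def d(1) mult.commute)
    next
      case False
      then have "i > d" using i by simp
      then have "coeff XQ i = 0" using eGQ(3) d(2) by (simp add: XQ_def coeff_monom_mult)
      moreover have "coeff P i = 0" using \<open>i > d\<close> d(1) by (simp add: coeff_eq_0)
      ultimately show ?thesis by (simp add: Q'_def)
    qed
  qed
  moreover have "smult (lead_coeff P ^ Suc e) (monom 1 (Suc n)) = P * G' + Q'"
  proof -
    have "smult (lead_coeff P ^ Suc e) (monom 1 (Suc n)) = smult l (monom 1 1 * smult (lead_coeff P ^ e) (monom 1 n))"
      by (simp add: l_def mult_monom)
    also have "\<dots> = smult l (monom 1 1 * (P * G + Q))" using eGQ(4) by simp
    also have "\<dots> = P * G' + Q'"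
      by (simp add: G'_def Q'_def XQ_def algebra_simps smult_add_right)
    finally show ?thesis .
  qed
  ultimately show ?case by blast
qed

lemma lin_dep:
  fixes f :: "nat \<Rightarrow> 'b::idom poly"
  assumes R: "subr R"
  shows "finite I \<Longrightarrow> card I > d \<Longrightarrow> (\<forall>i\<in>I. polyR R (f i) \<and> (\<forall>j\<ge>d. coeff (f i) j = 0)) \<Longrightarrow>
    \<exists>b. (\<forall>i\<in>I. b i \<in> R) \<and> (\<exists>i\<in>I. b i \<noteq> 0) \<and> (\<Sum>i\<in>I. smult (b i) (f i)) = 0"
proof (induction d arbitrary: I f)
  case 0
  then obtain i0 where i0: "i0 \<in> I" by fastforce
  have z: "\<forall>i\<in>I. f i = 0" using 0(3) by (auto simp: poly_eq_iff)
  define b where "b = (\<lambda>i. if i = i0 then (1::'b) else 0)"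
  have "(\<Sum>i\<in>I. smult (b i) (f i)) = 0" using z by simp
  moreover have "\<forall>i\<in>I. b i \<in> R" using R by (simp add: b_def subr_def)
  moreover have "b i0 \<noteq> 0" by (simp add: b_def)
  ultimately show ?case using i0 by blast
next
  case (Suc d)
  show ?case
  proof (cases "\<forall>i\<in>I. coeff (f i) d = 0")
    case True
    have "\<forall>i\<in>I. polyR R (f i) \<and> (\<forall>j\<ge>d. coeff (f i) j = 0)"
    proof (intro ballI conjI allI impI)
      fix i j assume "i \<in> I" "j \<ge> d"
      then show "coeff (f i) j = 0" using True Suc.prems(3) by (cases "j = d") auto
    qed (use Suc.prems(3) in auto)
    then show ?thesis using Suc.IH[of I f] Suc.prems(1,2) by simp
  next
    case False
    then obtain i0 where i0: "i0 \<in> I" "coeff (f i0) d \<noteq> 0" by blast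
    define l where "l = coeff (f i0) d"
    define I' where "I' = I - {i0}"
    define g where "g = (\<lambda>i. smult l (f i) - smult (coeff (f i) d) (f i0))"
    have lR: "l \<in> R" using Suc.prems(3) i0 by (simp add: polyR_def l_def)
    have fin': "finite I'" using Suc.prems(1) by (simp add: I'_def)
    have card': "card I' > d" using Suc.prems(1,2) i0(1) by (simp add: I'_def card_Diff_singleton)
    have g: "\<forall>i\<in>I'. polyR R (g i) \<and> (\<forall>j\<ge>d. coeff (g i) j = 0)"
    proof (intro ballI conjI allI impI)
      fix i assume i: "i \<in> I'"
      then have fi: "polyR R (f i)" using Suc.prems(3) by (simp add: I'_def)
      have fi0: "polyR R (f i0)" using Suc.prems(3) i0 by simp
      have ci: "coeff (f i) d \<in> R" using fi by (simp add: polyR_def)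
      show "polyR R (g i)" unfolding g_def by (intro polyR_diff[OF R] polyR_smult[OF R] fi fi0 lR ci)
      fix j assume j: "j \<ge> d"
      show "coeff (g i) j = 0"
      proof (cases "j = d")
        case True then show ?thesis by (simp add: g_def l_def mult.commute)
      next
        case False
        then have "j \<ge> Suc d" using j by simp
        then show ?thesis using Suc.prems(3) i i0(1) by (simp add: g_def I'_def)
      qed
    qed
    obtain b' where b': "\<forall>i\<in>I'. b' i \<in> R" "\<exists>i\<in>I'. b' i \<noteq> 0" "(\<Sum>i\<in>I'. smult (b' i) (g i)) = 0"
      using Suc.IH[OF fin' card' g] by blast
    define b where "b = (\<lambda>i. if i = i0 then - (\<Sum>i\<in>I'. b' i * coeff (f i) d) else b' i * l)"
    have "\<forall>i\<in>I. b i \<in> R"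
    proof
      fix i assume "i \<in> I"
      show "b i \<in> R"
      proof (cases "i = i0")
        case True
        have "(\<Sum>i\<in>I'. b' i * coeff (f i) d) \<in> R"
        proof (rule subr_sum[OF R])
          fix k assume "k \<in> I'"
          then have "b' k \<in> R" "coeff (f k) d \<in> R" using b'(1) Suc.prems(3) by (auto simp: I'_def polyR_def)
          then show "b' k * coeff (f k) d \<in> R" using R by (simp add: subr_def)
        qed
        then show ?thesis using True R subr_neg by (simp add: b_def)
      next
        case False
        then have "b' i \<in> R" using b'(1) \<open>i \<in> I\<close> by (simp add: I'_def)
        then show ?thesis using False lR R by (simp add: b_def subr_def)
      qed
    qed
    moreover have "\<exists>i\<in>I. b i \<noteq> 0"
    proof -
      obtain i where i: "i \<in> I'" "b' i \<noteq> 0" using b'(2) by blast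
      then have "i \<in> I" "i \<noteq> i0" by (auto simp: I'_def)
      then have "b i = b' i * l" by (simp add: b_def)
      also have "\<dots> \<noteq> 0" using i(2) i0(2) by (simp add: l_def)
      finally show ?thesis using \<open>i \<in> I\<close> by blast
    qed
    moreover have "(\<Sum>i\<in>I. smult (b i) (f i)) = 0"
    proof -
      have I: "I = insert i0 I'" "i0 \<notin> I'" using i0(1) by (auto simp: I'_def)
      have "(\<Sum>i\<in>I. smult (b i) (f i)) = smult (b i0) (f i0) + (\<Sum>i\<in>I'. smult (b i) (f i))"
        using fin' I by simp
      also have "(\<Sum>i\<in>I'. smult (b i) (f i)) = (\<Sum>i\<in>I'. smult (b' i * l) (f i))"
        by (rule sum.cong[OF refl]) (use I in \<open>auto simp: b_def\<close>)
      also have "(\<Sum>i\<in>I'. smult (b' i) (g i)) = (\<Sum>i\<in>I'. smult (b' i * l) (f i)) - smult (\<Sum>i\<in>I'. b' i * coeff (f i) d) (f i0)"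
        by (simp add: g_def smult_diff_right sum_subtractf smult_sum)
      then have "(\<Sum>i\<in>I'. smult (b' i * l) (f i)) = smult (\<Sum>i\<in>I'. b' i * coeff (f i) d) (f i0)"
        using b'(3) by simp
      finally show ?thesis by (simp add: b_def)
    qed
    ultimately show ?thesis by blast
  qed
qed


lemma subr_PR: "subr (PR :: 'a::comm_ring_1 hs set)"
  unfolding subr_def by (intro conjI ballI PR_0 PR_1 PR_add PR_diff PR_mult)

lemma hpow_co: "hpow (co x) n = co (x ^ n)"
  by (induction n) (simp_all add: co_one co_times)

lemma hsum_fin:
  fixes F :: "nat \<Rightarrow> rat \<Rightarrow> 'a::comm_monoid_add"
  assumes "\<And>i. i > d \<Longrightarrow> F i = hzero"
  shows "hsum F q = (\<Sum>i\<le>d. F i q)"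
  unfolding hsum_def
proof (rule sum.mono_neutral_left)
  show "{i. F i q \<noteq> 0} \<subseteq> {..d}"
  proof
    fix i assume "i \<in> {i. F i q \<noteq> 0}"
    then show "i \<in> {..d}" using assms[of i] by (cases "i > d") (auto simp: hzero_def)
  qed
qed auto

theorem corollary2p3:
  fixes p :: nat
  assumes "prime p"
    and "CHAR('a::alg_closed_field) = p"
    and "\<forall>x::'a. \<exists>P :: 'a poly. P \<noteq> 0 \<and> (\<forall>i. coeff P i \<in> range of_nat) \<and> poly P x = 0"
  shows "(s_ser p :: rat \<Rightarrow> 'a) \<in> hahn \<and> transcendental_over_puiseux (s_ser p :: rat \<Rightarrow> 'a)"
proof
  have pr: "prime p" and chp: "CHAR('a) = p" using assms by auto
  have p2: "p \<ge> 2" using pr prime_ge_2_nat by blast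
  show "(s_ser p :: rat \<Rightarrow> 'a) \<in> hahn" by (rule s_ser_hahn[OF p2])
  show "transcendental_over_puiseux (s_ser p :: rat \<Rightarrow> 'a)"
    unfolding transcendental_over_puiseux_def
  proof (intro allI impI)
    fix c :: "nat \<Rightarrow> rat \<Rightarrow> 'a" and d :: nat
    assume h: "(\<forall>i\<le>d. c i \<in> puiseux) \<and> (\<exists>i\<le>d. c i \<noteq> hzero)"
    show "hsum (\<lambda>i. if i \<le> d then hmul (c i) (hpow (s_ser p) i) else hzero) \<noteq> hzero"
    proof
      assume H: "hsum (\<lambda>i. if i \<le> d then hmul (c i) (hpow (s_ser p) i) else hzero) = hzero"
      define S where "S = (sS p :: 'a hs)"
      have coS: "co S = s_ser p" unfolding S_def by (rule co_sS[OF pr chp])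
      define C where "C = (\<lambda>i. Abs_hs (c i) :: 'a hs)"
      have coC: "co (C i) = c i" if "i \<le> d" for i
        unfolding C_def using h that puiseux_hahn Abs_hs_inverse by blast
      have CPR: "C i \<in> PR" if "i \<le> d" for i
        using coC[OF that] h that by (simp add: PR_def)
      have sum0: "(\<Sum>i\<le>d. C i * S ^ i) = 0"
      proof -
        have "co (\<Sum>i\<le>d. C i * S ^ i) q = co 0 q" for q
        proof -
          have "co (\<Sum>i\<le>d. C i * S ^ i) q = (\<Sum>i\<le>d. hmul (c i) (hpow (s_ser p) i) q)"
            unfolding co_sum by (rule sum.cong[OF refl]) (simp add: co_times coC hpow_co coS[symmetric])
          also have "\<dots> = hsum (\<lambda>i. if i \<le> d then hmul (c i) (hpow (s_ser p) i) else hzero) q"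
            by (subst hsum_fin[of d]) auto
          also have "\<dots> = co 0 q" using H by (simp add: hzero_def)
          finally show ?thesis .
        qed
        then show ?thesis by (simp add: co_inject')
      qed
      define Pp where "Pp = (\<Sum>i\<le>d. monom (C i) i)"
      have coeffP: "coeff Pp i = (if i \<le> d then C i else 0)" for i
        unfolding Pp_def coeff_sum by (simp add: sum.delta)
      have polyP: "poly Pp S = 0" unfolding Pp_def poly_sum poly_monom using sum0 by simp
      obtain i0 where i0: "i0 \<le> d" "c i0 \<noteq> hzero" using h by blast
      have "C i0 \<noteq> 0"
      proof
        assume "C i0 = 0"
        then have "co (C i0) = co 0" by simp
        then show False using coC[OF i0(1)] i0(2) by (simp add: co_zero)
      qed
      then have Pnz: "Pp \<noteq> 0" using coeffP[of i0] i0(1) by auto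
      have PRP: "polyR PR Pp" unfolding polyR_def
      proof
        fix i show "coeff Pp i \<in> PR" unfolding coeffP using CPR[of i] PR_0 by (cases "i \<le> d") simp_all
      qed
      define D where "D = degree Pp"
      define l where "l = lead_coeff Pp"
      have lnz: "l \<noteq> 0" using Pnz by (simp add: l_def)
      have lPR: "l \<in> PR" using PRP by (simp add: polyR_def l_def)
      show False
      proof (cases "D = 0")
        case True
        then have "Pp = [:coeff Pp 0:]" using degree_0_id D_def by metis
        moreover have "poly [:coeff Pp 0:] S = coeff Pp 0" by simp
        ultimately have "poly Pp S = coeff Pp 0" by metis
        moreover have "coeff Pp 0 \<noteq> 0" using True lnz by (simp add: l_def D_def)
        ultimately show False using polyP by simp
      next
        case False
        then have D1: "D \<ge> 1" by simp
        have "\<forall>k. \<exists>t. polyR PR (fst (snd t)) \<and> polyR PR (snd (snd t)) \<and> (\<forall>i\<ge>D. coeff (snd (snd t)) i = 0) \<and>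
            smult (l ^ fst t) (monom 1 (p ^ k)) = Pp * fst (snd t) + snd (snd t)"
        proof
          fix k
          obtain e G Q where eGQ: "polyR PR G" "polyR PR Q" "\<forall>i\<ge>D. coeff Q i = 0"
            "smult (l ^ e) (monom 1 (p ^ k)) = Pp * G + Q"
            using poly_red[OF subr_PR PRP D_def[symmetric] D1, of "p ^ k"] unfolding l_def by blast
          show "\<exists>t. polyR PR (fst (snd t)) \<and> polyR PR (snd (snd t)) \<and> (\<forall>i\<ge>D. coeff (snd (snd t)) i = 0) \<and>
            smult (l ^ fst t) (monom 1 (p ^ k)) = Pp * fst (snd t) + snd (snd t)"
            using eGQ by (intro exI[of _ "(e, G, Q)"]) simp
        qed
        then obtain T where T: "\<forall>k. polyR PR (fst (snd (T k))) \<and> polyR PR (snd (snd (T k))) \<and> (\<forall>i\<ge>D. coeff (snd (snd (T k))) i = 0) \<and>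
            smult (l ^ fst (T k)) (monom 1 (p ^ k)) = Pp * fst (snd (T k)) + snd (snd (T k))"
          by (rule choice[THEN exE])
        define e where "e = (\<lambda>k. fst (T k))"
        define G where "G = (\<lambda>k. fst (snd (T k)))"
        define Q where "Q = (\<lambda>k. snd (snd (T k)))"
        have GR: "\<And>k. polyR PR (G k)" and QR: "\<And>k. polyR PR (Q k)" and Qd: "\<And>k i. i \<ge> D \<Longrightarrow> coeff (Q k) i = 0"
          and eq: "\<And>k. smult (l ^ e k) (monom 1 (p ^ k)) = Pp * G k + Q k"
          using T by (auto simp: e_def G_def Q_def)
        obtain b where b: "\<forall>i\<in>{..D}. b i \<in> PR" "\<exists>i\<in>{..D}. b i \<noteq> 0" "(\<Sum>i\<in>{..D}. smult (b i) (Q i)) = 0"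
          using lin_dep[OF subr_PR, of "{..D}" D Q] QR Qd by auto
        have "(\<Sum>k\<le>D. smult (b k) (smult (l ^ e k) (monom 1 (p ^ k)))) = Pp * (\<Sum>k\<le>D. smult (b k) (G k))"
        proof -
          have "(\<Sum>k\<le>D. smult (b k) (smult (l ^ e k) (monom 1 (p ^ k)))) = (\<Sum>k\<le>D. smult (b k) (Pp * G k + Q k))"
            using eq by simp
          also have "\<dots> = Pp * (\<Sum>k\<le>D. smult (b k) (G k)) + (\<Sum>k\<le>D. smult (b k) (Q k))"
            by (simp add: smult_add_right sum.distrib sum_distrib_left mult_smult_right)
          finally show ?thesis using b(3) by simp
        qed
        then have "poly (\<Sum>k\<le>D. smult (b k) (smult (l ^ e k) (monom 1 (p ^ k)))) S = poly Pp S * poly (\<Sum>k\<le>D. smult (b k) (G k)) S"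
          by simp
        then have rel: "(\<Sum>k\<le>D. (b k * l ^ e k) * S ^ (p ^ k)) = 0"
          using polyP by (simp add: poly_sum poly_monom mult.assoc)
        have bPR: "\<forall>k\<le>D. b k * l ^ e k \<in> PR"
        proof (intro allI impI)
          fix k assume "k \<le> D"
          then have "b k \<in> PR" using b(1) by simp
          moreover have "l ^ e k \<in> PR" by (rule PR_power[OF lPR])
          ultimately show "b k * l ^ e k \<in> PR" by (rule PR_mult)
        qed
        have "\<forall>k\<le>D. b k * l ^ e k = 0"
          using lin_rel[OF pr chp bPR] rel unfolding S_def by blast
        then show False using b(2) lnz by auto
      qed
    qed
  qed
qed


end
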